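(* Let $q$ be a prime power, $n$ a positive integer, $L(x)=\sum_{i=0}^{n-1}a_ix^{q^{2i}}$ with $a_i\in\mathbb F_{q^{2n}}$, and suppose $L$ has degree $q^{2m}$ for some nonnegative integer $m$. For $c\in\mathbb F_{q^2}$ let $N_c$ be the number of $u\in\mathbb F_{q^{2n}}$ with $\mathrm{Tr}(uL(u^q))+c=0$. Then $|N_c-q^{2(n-1)}|\le(q^2-1)q^{n+2m-1}$, and equality holds if and only if $c=0$ and $\dim\ker(\upsilon L^*+L)=2m+1$ for every $\upsilon\in U$. In this case $N_0-q^{2(n-1)}=(-1)^{n-1}(q^2-1)q^{n+2m-1}$.
   Context: $\mathrm{Tr}$ is the trace $\mathbb F_{q^{2n}}\to\mathbb F_{q^2}$. $L^*(x)=\sum_{i=0}^{n-1}(a_i^qx)^{q^{2(n-i-1)}}$. $U$ is the subgroup of order $q+1$ of $\mathbb F_{q^2}^*$. Kernels are those of the induced $\mathbb F_{q^2}$-linear maps on $\mathbb F_{q^{2n}}$, dimensions over $\mathbb F_{q^2}$. *)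

theory Defs
  imports "HOL-Computational_Algebra.Primes"
begin

definition subfield_q2 :: "nat \<Rightarrow> 'a::{field,finite} set" where
  "subfield_q2 q = {x. x ^ (q^2) = x}"

definition Tr :: "nat \<Rightarrow> nat \<Rightarrow> 'a::{field,finite} \<Rightarrow> 'a" where
  "Tr q n x = (\<Sum>j<n. x ^ (q ^ (2*j)))"

definition linpoly :: "nat \<Rightarrow> nat \<Rightarrow> (nat \<Rightarrow> 'a::{field,finite}) \<Rightarrow> 'a \<Rightarrow> 'a" where
  "linpoly q n a x = (\<Sum>i<n. a i * x ^ (q ^ (2*i)))"

definition linpoly_star :: "nat \<Rightarrow> nat \<Rightarrow> (nat \<Rightarrow> 'a::{field,finite}) \<Rightarrow> 'a \<Rightarrow> 'a" where
  "linpoly_star q n a x = (\<Sum>i<n. (a i ^ q * x) ^ (q ^ (2*(n - i - 1))))"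

definition U_grp :: "nat \<Rightarrow> 'a::{field,finite} set" where
  "U_grp q = {v. v \<in> subfield_q2 q \<and> v \<noteq> 0 \<and> v ^ (q+1) = 1}"

definition dim_q2 :: "nat \<Rightarrow> 'a::{field,finite} set \<Rightarrow> nat" where
  "dim_q2 q S = (THE d. card S = (q^2) ^ d)"

definition ker_map :: "nat \<Rightarrow> nat \<Rightarrow> (nat \<Rightarrow> 'a::{field,finite}) \<Rightarrow> 'a \<Rightarrow> 'a set" where
  "ker_map q n a v = {x. v * linpoly_star q n a x + linpoly q n a x = 0}"

definition Ncount :: "nat \<Rightarrow> nat \<Rightarrow> (nat \<Rightarrow> 'a::{field,finite}) \<Rightarrow> 'a \<Rightarrow> nat" where
  "Ncount q n a c = card {u. Tr q n (u * linpoly q n a (u ^ q)) + c = 0}"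

end

theory Submission
  imports Defs "HOL-Number_Theory.Residues" "HOL-Computational_Algebra.Polynomial"
begin

locale ctx =
  fixes q n p k :: nat and a :: "nat \<Rightarrow> 'a::{field,finite}"
  assumes p_prime: "prime p" and k_pos: "0 < k" and q_def: "q = p ^ k"
    and n_pos: "0 < n" and card_UNIV: "card (UNIV :: 'a set) = q ^ (2*n)"
begin

lemma q_ge2: "q \<ge> 2"
proof -
  have "p \<ge> 2" using p_prime prime_ge_2_nat by blast
  hence "p ^ k \<ge> p ^ 1" using k_pos by (intro power_increasing) auto
  thus ?thesis using \<open>p \<ge> 2\<close> q_def by simp
qed

lemma CHAR_eq: "CHAR('a) = p"
proof -
  have "CHAR('a) dvd p ^ (k * (2*n))"
    using CHAR_dvd_CARD[where 'a='a] card_UNIV q_def by (simp add: power_mult)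
  moreover have "prime CHAR('a)"
    using prime_CHAR_semidom finite_imp_CHAR_pos[OF finite_UNIV] by blast
  ultimately have "CHAR('a) dvd p" using prime_dvd_power by blast
  thus ?thesis using \<open>prime CHAR('a)\<close> p_prime primes_dvd_imp_eq by blast
qed

lemma prime_CHAR: "prime CHAR('a)" using CHAR_eq p_prime by simp

lemma frob_add: "((x::'a) + y) ^ (q ^ j) = x ^ (q ^ j) + y ^ (q ^ j)"
  using freshmans_dream'[OF prime_CHAR, of "q^j" "k*j"] CHAR_eq q_def
  by (simp add: power_mult)

lemma frob_sum: "(sum (f :: 'b \<Rightarrow> 'a) A) ^ (q ^ j) = sum (\<lambda>i. f i ^ (q ^ j)) A"
  using freshmans_dream_sum'[OF prime_CHAR, of "q^j" "k*j"] CHAR_eq q_def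
  by (simp add: power_mult)

lemma frob_minus: "(- (x::'a)) ^ (q ^ j) = - (x ^ (q ^ j))"
proof -
  have "x ^ (q ^ j) + (- x) ^ (q ^ j) = 0"
    using frob_add[of x "-x" j] q_ge2 by (simp add: power_0_left)
  thus ?thesis by (simp add: eq_neg_iff_add_eq_0 add.commute)
qed

lemma frob_diff: "((x::'a) - y) ^ (q ^ j) = x ^ (q ^ j) - y ^ (q ^ j)"
  using frob_add[of x "-y" j] frob_minus[of y j] by simp

lemma frob_add1: "((x::'a) + y) ^ q = x ^ q + y ^ q"
  using frob_add[of x y 1] by simp
lemma frob_minus1: "(- (x::'a)) ^ q = - (x ^ q)"
  using frob_minus[of x 1] by simp
lemma frob_sum1: "(sum (f :: 'b \<Rightarrow> 'a) A) ^ q = sum (\<lambda>i. f i ^ q) A"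
  using frob_sum[of f A 1] by simp

lemma pow_card: "(x::'a) ^ card (UNIV :: 'a set) = x"
proof (cases "x = 0")
  case False
  have "x * (\<Prod>y\<in>UNIV-{0}. x * y) = x * x ^ (card (UNIV :: 'a set) - 1) * \<Prod>(UNIV-{0})"
    by (simp add: prod.distrib mult_ac)
  also have "x * x ^ (card (UNIV :: 'a set) - 1) = x ^ Suc (card (UNIV :: 'a set) - 1)"
    by (subst power_Suc) auto
  also have "Suc (card (UNIV :: 'a set) - 1) = card (UNIV :: 'a set)"
    using finite_UNIV_card_ge_0[where ?'a = 'a] by simp
  also have "(\<Prod>y\<in>UNIV-{0}. x * y) = (\<Prod>y\<in>UNIV-{0}. y)"
    by (rule prod.reindex_bij_witness[of _ "\<lambda>y. y / x" "\<lambda>y. x * y"]) (use False in auto)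
  finally show ?thesis
    by simp
qed (use finite_UNIV_card_ge_0[where ?'a = 'a] in auto)

lemma pow_Qn: "(x::'a) ^ ((q^2) ^ n) = x"
  using pow_card card_UNIV by (simp add: power_mult)

lemma pow_Qn_mult: "(x::'a) ^ ((q^2) ^ (n * t)) = x"
  by (induction t) (simp_all add: power_add power_mult pow_Qn)

lemma pow_Qn_add: "(x::'a) ^ ((q^2) ^ (n + j)) = x ^ ((q^2) ^ j)"
  by (simp add: power_add power_mult pow_Qn)

end

lemma roots_card_le:
  fixes P :: "'a::field poly"
  assumes "P \<noteq> 0" "\<And>x. x \<in> S \<Longrightarrow> poly P x = 0"
  shows "card S \<le> degree P"
proof -
  have "S \<subseteq> {x. poly P x = 0}" using assms by auto
  hence "card S \<le> card {x. poly P x = 0}"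
    by (intro card_mono poly_roots_finite assms)
  also have "\<dots> \<le> degree P" by (rule card_poly_roots_bound[OF assms(1)])
  finally show ?thesis .
qed

lemma card_pow_eq_const:
  assumes "N > 0"
  shows "card {x::'a::field. x ^ N = c} \<le> N"
proof -
  let ?P = "monom (1::'a) N + [:-c:]"
  have d: "degree ?P = N" using assms by (subst degree_add_eq_left) (auto simp: degree_monom_eq)
  hence "?P \<noteq> 0" using assms by auto
  have "card {x::'a::field. x ^ N = c} \<le> degree ?P"
    by (rule roots_card_le[OF \<open>?P \<noteq> 0\<close>]) (auto simp: poly_monom)
  thus ?thesis using d by simp
qed

lemma card_pow_eq_lin:
  assumes "N \<ge> 2"
  shows "card {x::'a::field. x ^ N = b * x} \<le> N"
proof -
  let ?P = "monom (1::'a) N + [:0, -b:]"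
  have "degree [:0, b:] \<le> 1" by (simp add: degree_pCons_le)
  hence d: "degree ?P = N" using assms by (subst degree_add_eq_left) (auto simp: degree_monom_eq)
  hence "?P \<noteq> 0" using assms by auto
  have "card {x::'a::field. x ^ N = b * x} \<le> degree ?P"
    by (rule roots_card_le[OF \<open>?P \<noteq> 0\<close>]) (auto simp: poly_monom algebra_simps)
  thus ?thesis using d by simp
qed

lemma card_fibers:
  assumes "finite A" "finite B" "f ` A \<subseteq> B" "\<And>b. b \<in> B \<Longrightarrow> card {x\<in>A. f x = b} \<le> t"
  shows "card A \<le> card B * t"
proof -
  have "A = (\<Union>b\<in>B. {x\<in>A. f x = b})" using assms(3) by auto
  hence "card A \<le> (\<Sum>b\<in>B. card {x\<in>A. f x = b})"
    using card_UN_le[OF assms(2), of "\<lambda>b. {x\<in>A. f x = b}"] by simp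
  also have "\<dots> \<le> (\<Sum>b\<in>B. t)" by (intro sum_mono assms(4))
  finally show ?thesis by (simp add: mult.commute)
qed

lemma card_fibers_image:
  assumes "finite A" "\<And>b. card {x\<in>A. f x = b} \<le> t"
  shows "card A \<le> card (f ` A) * t"
  using card_fibers[where f=f and t=t, OF assms(1) finite_imageI[OF assms(1)]] assms(2) by auto

lemma geom_nat: "((Q::nat) - 1) * (\<Sum>j<n. Q ^ j) = Q ^ n - 1"
proof -
  have "int ((Q - 1) * (\<Sum>j<n. Q ^ j)) = int (Q ^ n - 1)" if "Q > 0"
  proof -
    have "int ((Q - 1) * (\<Sum>j<n. Q ^ j)) = (int Q - 1) * (\<Sum>j<n. int Q ^ j)"
      using that by (simp add: of_nat_diff)
    also have "\<dots> = int Q ^ n - 1" by (rule power_diff_1_eq[symmetric])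
    also have "\<dots> = int (Q ^ n - 1)" using that by (simp add: of_nat_diff)
    finally show ?thesis .
  qed
  moreover have "Q = 0 \<Longrightarrow> ?thesis" by (cases n) auto
  ultimately show ?thesis by (cases "Q = 0") (simp_all only: of_nat_eq_iff neq0_conv)
qed

context ctx
begin

lemma pow_card_minus1: "(x::'a) \<noteq> 0 \<Longrightarrow> x ^ (q^(2*n) - 1) = 1"
proof -
  assume x: "x \<noteq> 0"
  have "q^(2*n) > 0" using q_ge2 by simp
  hence e: "q^(2*n) = Suc (q^(2*n) - 1)" by simp
  have "x * x ^ (q^(2*n) - 1) = x ^ q^(2*n)"
    by (subst (2) e) (simp only: power_Suc)
  also have "\<dots> = x * 1" using pow_card card_UNIV by simp
  finally show ?thesis using x by simp
qed

abbreviation kf :: "'a set" where "kf \<equiv> subfield_q2 q"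
definition Fq :: "'a set" where "Fq = {x. x ^ q = x}"

lemma kf_iff: "x \<in> kf \<longleftrightarrow> x ^ (q^2) = x" by (simp add: subfield_q2_def)

lemma Fq_sub_kf: "x \<in> Fq \<Longrightarrow> x \<in> kf"
proof -
  assume "x \<in> Fq"
  hence "x ^ q = x" by (simp add: Fq_def)
  have "x ^ (q^2) = (x ^ q) ^ q" by (simp only: power2_eq_square power_mult)
  thus ?thesis using \<open>x ^ q = x\<close> by (simp add: kf_iff)
qed

lemma kf_pow_Q: "x \<in> kf \<Longrightarrow> x ^ ((q^2)^j) = x"
proof (induction j)
  case (Suc j)
  have "x ^ ((q^2)^Suc j) = (x ^ ((q^2)^j)) ^ (q^2)" by (simp only: power_Suc2 power_mult)
  thus ?case using Suc by (simp add: kf_iff)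
qed simp

lemma kf_pow_q_q: "x \<in> kf \<Longrightarrow> (x ^ q) ^ q = x"
proof -
  assume "x \<in> kf"
  have "x ^ (q^2) = (x ^ q) ^ q" by (simp only: power2_eq_square power_mult)
  thus ?thesis using \<open>x \<in> kf\<close> by (simp add: kf_iff)
qed

lemma q_pos[simp]: "0 < q" using q_ge2 by simp

lemma kf_add: "x \<in> kf \<Longrightarrow> y \<in> kf \<Longrightarrow> x + y \<in> kf"
  using frob_add[of x y 2] by (simp add: kf_iff)
lemma kf_minus: "x \<in> kf \<Longrightarrow> -x \<in> kf"
  using frob_minus[of x 2] by (simp add: kf_iff)
lemma kf_diff: "x \<in> kf \<Longrightarrow> y \<in> kf \<Longrightarrow> x - y \<in> kf"
  using frob_diff[of x y 2] by (simp add: kf_iff)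
lemma kf_mult: "x \<in> kf \<Longrightarrow> y \<in> kf \<Longrightarrow> x * y \<in> kf"
  by (simp add: kf_iff power_mult_distrib)
lemma kf_power: "x \<in> kf \<Longrightarrow> x ^ j \<in> kf"
proof -
  assume "x \<in> kf"
  have "(x^j)^(q^2) = (x^(q^2))^j" by (simp add: power_mult[symmetric] mult.commute)
  thus ?thesis using \<open>x \<in> kf\<close> by (simp add: kf_iff)
qed
lemma kf_inverse: "x \<in> kf \<Longrightarrow> inverse x \<in> kf"
  by (simp add: kf_iff power_inverse)
lemma kf_divide: "x \<in> kf \<Longrightarrow> y \<in> kf \<Longrightarrow> x / y \<in> kf"
  by (simp add: divide_inverse kf_mult kf_inverse)
lemma kf_0: "0 \<in> kf" by (simp add: kf_iff)
lemma kf_1: "1 \<in> kf" by (simp add: kf_iff)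

lemmas kf_closed = kf_add kf_minus kf_diff kf_mult kf_power kf_inverse kf_divide kf_0 kf_1

lemma Fq_add: "x \<in> Fq \<Longrightarrow> y \<in> Fq \<Longrightarrow> x + y \<in> Fq"
  using frob_add1[of x y] by (simp add: Fq_def)
lemma Fq_minus: "x \<in> Fq \<Longrightarrow> -x \<in> Fq"
  using frob_minus1[of x] by (simp add: Fq_def)
lemma Fq_mult: "x \<in> Fq \<Longrightarrow> y \<in> Fq \<Longrightarrow> x * y \<in> Fq"
  by (simp add: Fq_def power_mult_distrib)
lemma Fq_divide: "x \<in> Fq \<Longrightarrow> y \<in> Fq \<Longrightarrow> x / y \<in> Fq"
  by (simp add: Fq_def power_divide)
lemma Fq_0: "0 \<in> Fq" by (simp add: Fq_def)
lemma Fq_1: "1 \<in> Fq" by (simp add: Fq_def)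

lemma card_kf_le: "card kf \<le> q^2"
proof -
  have eq: "kf = {x::'a. x ^ (q^2) = 1 * x}" by (simp add: subfield_q2_def)
  have "q^2 \<ge> 2"
  proof -
    have "2*1 \<le> q*q" using q_ge2 by (intro mult_le_mono) auto
    thus ?thesis by (simp add: power2_eq_square)
  qed
  from card_pow_eq_lin[OF this, of "1::'a"] show ?thesis unfolding eq .
qed

lemma card_kf: "card kf = q^2"
proof -
  define M where "M = (\<Sum>j<n. (q^2) ^ j)"
  have geo: "(q^2 - 1) * M = q^(2*n) - 1" unfolding M_def using geom_nat[of "q^2" n] by (simp add: power_mult)
  have Mpos: "M > 0" unfolding M_def using n_pos by (auto intro!: sum_pos2[of _ 0])
  have img: "(\<lambda>x. x ^ M) ` (UNIV - {0}) \<subseteq> kf - {0}"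
  proof
    fix y assume "y \<in> (\<lambda>x::'a. x ^ M) ` (UNIV - {0})"
    then obtain x where x: "x \<noteq> 0" "y = x ^ M" by auto
    have e: "M * q^2 = M + (q^2 - 1) * M" using q_ge2
      by (simp add: algebra_simps diff_mult_distrib2)
    have "y ^ (q^2) = x ^ (M * q^2)" by (simp add: x power_mult)
    also have "\<dots> = x ^ M * x ^ ((q^2 - 1) * M)" by (simp only: e power_add)
    finally have "y ^ (q^2) = x ^ M * x ^ ((q^2 - 1) * M)" .
    also have "\<dots> = y" using pow_card_minus1[OF x(1)] geo x by simp
    finally show "y \<in> kf - {0}" using x by (simp add: kf_iff)
  qed
  have fib: "card {x \<in> UNIV - {0}. x ^ M = b} \<le> M" for b :: 'a
  proof -
    have "card {x \<in> UNIV - {0}. x ^ M = b} \<le> card {x::'a. x ^ M = b}"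
      by (rule card_mono) auto
    also have "\<dots> \<le> M" by (rule card_pow_eq_const[OF Mpos])
    finally show ?thesis .
  qed
  have "card (UNIV - {0::'a}) \<le> card (kf - {0}) * M"
    by (rule card_fibers[OF finite finite img fib])
  hence "q^(2*n) - 1 \<le> card (kf - {0}) * M" using card_UNIV by (simp add: card_Diff_singleton)
  hence "(q^2 - 1) * M \<le> card (kf - {0}) * M" using geo by simp
  hence "q^2 - 1 \<le> card (kf - {0})" using Mpos by simp
  moreover have "0 \<in> kf" by (simp add: kf_iff power_0_left)
  moreover have "card kf > 0" using \<open>0 \<in> kf\<close> by (auto simp: card_gt_0_iff)
  ultimately have "q^2 \<le> card kf" using q_ge2 by (simp add: card_Diff_singleton)
  thus ?thesis using card_kf_le by simp
qed

end

context ctx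
begin

lemma kf_minus0_card: "card (kf - {0}) = q^2 - 1"
  using card_kf by (simp add: card_Diff_singleton kf_0)

lemma kf_pow_Q1: "x \<in> kf \<Longrightarrow> x ^ (q^2) = x" by (simp add: kf_iff)

lemma kf_unit: "x \<in> kf \<Longrightarrow> x \<noteq> 0 \<Longrightarrow> x ^ (q^2 - 1) = 1"
proof -
  assume x: "x \<in> kf" "x \<noteq> 0"
  have e: "q^2 = Suc (q^2 - 1)" using q_ge2 by simp
  have "x * x ^ (q^2 - 1) = x ^ (q^2)" by (subst (2) e) (simp only: power_Suc)
  also have "\<dots> = x * 1" using x by (simp add: kf_iff)
  finally show ?thesis using x by simp
qed

lemma q2_factor: "q^2 - 1 = (q - 1) * (q + 1)"
  using q_ge2 by (simp add: power2_eq_square algebra_simps diff_mult_distrib)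

lemma norm_in_Fq: "x \<in> kf \<Longrightarrow> x ^ (q+1) \<in> Fq"
proof -
  assume x: "x \<in> kf"
  have "(x ^ (q+1)) ^ q = x ^ (q*q) * x ^ q" by (simp add: power_mult[symmetric] power_add algebra_simps)
  also have "x ^ (q*q) = x" using x by (simp add: kf_iff power2_eq_square)
  finally show ?thesis by (simp add: Fq_def power_add mult.commute)
qed

lemma card_Fq_le: "card Fq \<le> q"
proof -
  have eq: "Fq = {x::'a. x ^ q = 1 * x}" by (simp add: Fq_def)
  from card_pow_eq_lin[OF q_ge2, of "1::'a"] show ?thesis unfolding eq .
qed

lemma card_Fq_and_norm_surj:
  "card Fq = q \<and> (\<lambda>x. x ^ (q+1)) ` (kf - {0}) = Fq - {0}"
proof -
  let ?N = "\<lambda>x::'a. x ^ (q+1)"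
  have img: "?N ` (kf - {0}) \<subseteq> Fq - {0}" using norm_in_Fq by auto
  have fib: "card {x \<in> kf - {0}. ?N x = b} \<le> q + 1" for b
  proof -
    have "card {x \<in> kf - {0}. ?N x = b} \<le> card {x::'a. x ^ (q+1) = b}" by (rule card_mono) auto
    also have "\<dots> \<le> q + 1" by (rule card_pow_eq_const) simp
    finally show ?thesis .
  qed
  have "card (kf - {0}) \<le> card (?N ` (kf - {0})) * (q+1)"
    by (rule card_fibers_image[OF finite fib])
  hence "(q - 1) * (q + 1) \<le> card (?N ` (kf - {0})) * (q+1)"
    using kf_minus0_card q2_factor by simp
  hence A: "q - 1 \<le> card (?N ` (kf - {0}))" by (rule mult_right_le_imp_le) simp
  have B: "card (?N ` (kf - {0})) \<le> card (Fq - {0})" by (rule card_mono[OF finite img])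
  have "card (Fq - {0}) = card Fq - 1" by (simp add: card_Diff_singleton Fq_0)
  with A B card_Fq_le q_ge2 have C: "card Fq = q" by linarith
  from A B C q_ge2 \<open>card (Fq - {0}) = card Fq - 1\<close> have D: "card (?N ` (kf - {0})) = card (Fq - {0})"
    by linarith
  have "?N ` (kf - {0}) = Fq - {0}" by (rule card_subset_eq[OF finite img D])
  with C show ?thesis by simp
qed

lemma card_Fq: "card Fq = q" using card_Fq_and_norm_surj by simp

lemma norm_surj: "b \<in> Fq \<Longrightarrow> b \<noteq> 0 \<Longrightarrow> \<exists>x\<in>kf. x \<noteq> 0 \<and> x ^ (q+1) = b"
proof -
  assume "b \<in> Fq" "b \<noteq> 0"
  hence "b \<in> (\<lambda>x. x ^ (q+1)) ` (kf - {0})" using card_Fq_and_norm_surj by simp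
  thus ?thesis by auto
qed

lemma U_img: "x \<in> kf \<Longrightarrow> x \<noteq> 0 \<Longrightarrow> x ^ (q - 1) \<in> U_grp q"
proof -
  assume x: "x \<in> kf" "x \<noteq> 0"
  have "(x ^ (q - 1)) ^ (q + 1) = x ^ (q^2 - 1)" by (simp only: q2_factor power_mult)
  also have "\<dots> = 1" by (rule kf_unit[OF x])
  finally show ?thesis using x kf_power[OF x(1)] by (simp add: U_grp_def)
qed

lemma U_surj: "v \<in> U_grp q \<Longrightarrow> \<exists>x\<in>kf. x \<noteq> 0 \<and> x ^ (q - 1) = v"
proof -
  let ?f = "\<lambda>x::'a. x ^ (q - 1)"
  have img: "?f ` (kf - {0}) \<subseteq> U_grp q" using U_img by auto
  have fib: "card {x \<in> kf - {0}. ?f x = b} \<le> q - 1" for b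
  proof -
    have "card {x \<in> kf - {0}. ?f x = b} \<le> card {x::'a. x ^ (q - 1) = b}" by (rule card_mono) auto
    also have "\<dots> \<le> q - 1" by (rule card_pow_eq_const) (use q_ge2 in simp)
    finally show ?thesis .
  qed
  have le: "card (kf - {0}) \<le> card (?f ` (kf - {0})) * (q - 1)"
    by (rule card_fibers_image[OF finite fib])
  have eq: "(q + 1) * (q - 1) = card (kf - {0})"
    using kf_minus0_card q2_factor by (metis mult.commute)
  have "(q + 1) * (q - 1) \<le> card (?f ` (kf - {0})) * (q - 1)" unfolding eq by (rule le)
  hence A: "q + 1 \<le> card (?f ` (kf - {0}))" by (rule mult_right_le_imp_le) (use q_ge2 in auto)
  have "U_grp q \<subseteq> {x::'a. x ^ (q+1) = 1}" by (auto simp: U_grp_def)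
  hence "card (U_grp q :: 'a set) \<le> card {x::'a. x ^ (q+1) = 1}" by (intro card_mono) auto
  also have "\<dots> \<le> q + 1" by (rule card_pow_eq_const) simp
  finally have B: "card (U_grp q :: 'a set) \<le> card (?f ` (kf - {0}))" using A by linarith
  have "?f ` (kf - {0}) = U_grp q"
    using card_seteq[OF finite img B] .
  moreover assume "v \<in> U_grp q"
  ultimately have "v \<in> ?f ` (kf - {0})" by simp
  thus ?thesis by blast
qed

definition KT :: "'a set" where "KT = {t \<in> kf. t ^ q + t = 0}"

lemma card_KT: "card KT = q"
proof -
  let ?T = "\<lambda>t::'a. t ^ q + t"
  have "KT \<subseteq> {x::'a. x ^ q = (-1) * x}" by (auto simp: KT_def eq_neg_iff_add_eq_0)
  hence "card KT \<le> card {x::'a. x ^ q = (-1) * x}" by (rule card_mono[OF finite])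
  also have "\<dots> \<le> q" by (rule card_pow_eq_lin[OF q_ge2])
  finally have le: "card KT \<le> q" .
  have img: "?T ` kf \<subseteq> Fq"
  proof
    fix y assume "y \<in> ?T ` kf"
    then obtain t where t: "t \<in> kf" "y = ?T t" by auto
    have "y ^ q = (t ^ q) ^ q + t ^ q" using t frob_add1 by simp
    also have "(t ^ q) ^ q = t" using kf_pow_q_q[OF t(1)] .
    finally show "y \<in> Fq" using t by (simp add: Fq_def add.commute)
  qed
  have fib: "card {x \<in> kf. ?T x = b} \<le> card KT" for b
  proof (cases "\<exists>x0\<in>kf. ?T x0 = b")
    case False
    hence "{x \<in> kf. ?T x = b} = {}" by blast
    thus ?thesis by (simp only: card.empty)
  next
    case True
    then obtain x0 where x0: "x0 \<in> kf" "?T x0 = b" by auto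
    have "{x \<in> kf. ?T x = b} \<subseteq> (\<lambda>z. x0 + z) ` KT"
    proof
      fix x assume x: "x \<in> {x \<in> kf. ?T x = b}"
      have "(x - x0) ^ q + (x - x0) = ?T x - ?T x0" using frob_diff[of x x0 1] by simp
      also have "\<dots> = 0" using x x0 by simp
      finally have "x - x0 \<in> KT" using x x0 kf_diff by (simp add: KT_def)
      thus "x \<in> (\<lambda>z. x0 + z) ` KT" by (intro image_eqI[of _ _ "x - x0"]) auto
    qed
    hence "card {x \<in> kf. ?T x = b} \<le> card ((\<lambda>z. x0 + z) ` KT)" by (rule card_mono[OF finite])
    also have "\<dots> \<le> card KT" by (rule card_image_le[OF finite])
    finally show ?thesis .
  qed
  have "card kf \<le> card Fq * card KT" by (rule card_fibers[OF finite finite img fib])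
  hence "q * q \<le> q * card KT" using card_kf card_Fq by (simp add: power2_eq_square)
  hence "q \<le> card KT" by simp
  with le show ?thesis by simp
qed

lemma count_theta:
  assumes s: "s \<in> kf"
  shows "card {\<theta> \<in> kf - {0}. (\<theta> * s) ^ q + \<theta> * s = 0} = (if s = 0 then q^2 - 1 else q - 1)"
proof (cases "s = 0")
  case True
  hence "{\<theta> \<in> kf - {0}. (\<theta> * s) ^ q + \<theta> * s = 0} = kf - {0}" by auto
  thus ?thesis using True kf_minus0_card by simp
next
  case False
  let ?S = "{\<theta> \<in> kf - {0}. (\<theta> * s) ^ q + \<theta> * s = 0}"
  have im: "(\<lambda>\<theta>. \<theta> * s) ` ?S = KT - {0}"
  proof
    show "(\<lambda>\<theta>. \<theta> * s) ` ?S \<subseteq> KT - {0}" using False s kf_mult by (auto simp: KT_def)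
    show "KT - {0} \<subseteq> (\<lambda>\<theta>. \<theta> * s) ` ?S"
    proof
      fix t assume t: "t \<in> KT - {0}"
      hence "t / s \<in> ?S" using False s kf_divide by (auto simp: KT_def)
      moreover have "t = t / s * s" using False by simp
      ultimately show "t \<in> (\<lambda>\<theta>. \<theta> * s) ` ?S" by blast
    qed
  qed
  have inj: "inj_on (\<lambda>\<theta>. \<theta> * s) ?S" using False by (intro inj_onI) simp
  have "card ?S = card (KT - {0})" using card_image[OF inj] im by simp
  also have "\<dots> = q - 1" using card_KT by (simp add: card_Diff_singleton KT_def kf_0)
  finally show ?thesis using False by simp
qed

end

lemma card_fiber_sum:
  assumes "finite A" "finite B" "f ` A \<subseteq> B"
  shows "card A = (\<Sum>b\<in>B. card {x\<in>A. f x = b})"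
proof -
  have "A = (\<Union>b\<in>B. {x\<in>A. f x = b})" using assms(3) by auto
  hence "card A = card (\<Union>b\<in>B. {x\<in>A. f x = b})" by simp
  also have "\<dots> = (\<Sum>b\<in>B. card {x\<in>A. f x = b})"
    by (rule card_UN_disjoint) (use assms in auto)
  finally show ?thesis .
qed

context ctx
begin

definition subsp :: "'a set \<Rightarrow> bool" where
  "subsp W \<longleftrightarrow> 0 \<in> W \<and> (\<forall>x\<in>W. \<forall>y\<in>W. x + y \<in> W) \<and> (\<forall>c\<in>kf. \<forall>x\<in>W. c * x \<in> W)"

lemma subspD:
  assumes "subsp W"
  shows "0 \<in> W" "x \<in> W \<Longrightarrow> y \<in> W \<Longrightarrow> x + y \<in> W" "c \<in> kf \<Longrightarrow> x \<in> W \<Longrightarrow> c * x \<in> W"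
    "x \<in> W \<Longrightarrow> -x \<in> W" "x \<in> W \<Longrightarrow> y \<in> W \<Longrightarrow> x - y \<in> W"
proof -
  show "0 \<in> W" using assms by (simp add: subsp_def)
  show "x \<in> W \<Longrightarrow> y \<in> W \<Longrightarrow> x + y \<in> W" using assms by (simp add: subsp_def)
  show "c \<in> kf \<Longrightarrow> x \<in> W \<Longrightarrow> c * x \<in> W" using assms by (simp add: subsp_def)
  show mx: "x \<in> W \<Longrightarrow> -x \<in> W" for x
  proof -
    assume "x \<in> W"
    hence "(-1) * x \<in> W" using assms kf_minus[OF kf_1] unfolding subsp_def by blast
    thus ?thesis by simp
  qed
  show "x \<in> W \<Longrightarrow> y \<in> W \<Longrightarrow> x - y \<in> W"
    using mx[of y] assms unfolding subsp_def diff_conv_add_uminus by blast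
qed

lemma Q_gt1: "q^2 > 1"
proof -
  have "2*2 \<le> q*q" using q_ge2 by (intro mult_le_mono) auto
  thus ?thesis by (simp add: power2_eq_square)
qed

lemma Qpow_inj: "(q^2)^d = (q^2)^e \<Longrightarrow> d = e"
  using Q_gt1 by (simp add: power_inject_exp)

lemma Qpow_le: "(q^2)^d \<le> (q^2)^e \<Longrightarrow> d \<le> e"
  using Q_gt1 by simp

lemma dim_q2_eq: "card S = (q^2)^d \<Longrightarrow> dim_q2 q S = d"
  unfolding dim_q2_def by (rule the_equality) (auto dest: Qpow_inj)

lemma subsp_extend:
  assumes S: "subsp S" and w: "w \<notin> S"
  defines "S' \<equiv> (\<lambda>(c, s). c * w + s) ` (kf \<times> S)"
  shows "card S' = q^2 * card S" "subsp S'" "S \<subseteq> S'" "w \<in> S'"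
    "subsp W \<Longrightarrow> S \<subseteq> W \<Longrightarrow> w \<in> W \<Longrightarrow> S' \<subseteq> W"
proof -
  have inj: "inj_on (\<lambda>(c, s). c * w + s) (kf \<times> S)"
  proof (rule inj_onI, clarify)
    fix c s c' s' assume h: "c \<in> kf" "s \<in> S" "c' \<in> kf" "s' \<in> S" "c * w + s = c' * w + s'"
    show "c = c' \<and> s = s'"
    proof (cases "c = c'")
      case True thus ?thesis using h by simp
    next
      case False
      have "(c - c') * w = s' - s" using h(5) by (simp add: algebra_simps)
      hence "w = inverse (c - c') * (s' - s)" using False by (simp add: field_simps)
      moreover have "inverse (c - c') \<in> kf" using h kf_closed by simp
      ultimately have "w \<in> S" using h subspD[OF S] by simp
      thus ?thesis using w by simp
    qed
  qed
  show "card S' = q^2 * card S"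
    unfolding S'_def by (simp add: card_image[OF inj] card_cartesian_product card_kf)
  show "subsp S'"
    unfolding subsp_def
  proof (intro conjI ballI)
    show "0 \<in> S'" unfolding S'_def using subspD(1)[OF S] kf_0 by (auto intro!: image_eqI[of _ _ "(0, 0)"])
  next
    fix x y assume "x \<in> S'" "y \<in> S'"
    then obtain c s c' s' where h: "c \<in> kf" "s \<in> S" "c' \<in> kf" "s' \<in> S" "x = c * w + s" "y = c' * w + s'"
      unfolding S'_def by auto
    have "x + y = (c + c') * w + (s + s')" using h by (simp add: algebra_simps)
    moreover have "c + c' \<in> kf" "s + s' \<in> S" using h kf_add subspD[OF S] by auto
    ultimately show "x + y \<in> S'" unfolding S'_def by (auto intro!: image_eqI[of _ _ "(c + c', s + s')"])
  next
    fix a x assume a: "a \<in> kf" and "x \<in> S'"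
    then obtain c s where h: "c \<in> kf" "s \<in> S" "x = c * w + s"
      unfolding S'_def by auto
    have "a * x = (a * c) * w + a * s" using h by (simp add: algebra_simps)
    moreover have "a * c \<in> kf" "a * s \<in> S" using h a kf_mult subspD[OF S] by auto
    ultimately show "a * x \<in> S'" unfolding S'_def by (auto intro!: image_eqI[of _ _ "(a * c, a * s)"])
  qed
  show "S \<subseteq> S'"
  proof
    fix s assume "s \<in> S"
    thus "s \<in> S'" unfolding S'_def using kf_0 by (auto intro!: image_eqI[of _ _ "(0, s)"])
  qed
  show "w \<in> S'" unfolding S'_def using kf_1 subspD(1)[OF S] by (auto intro!: image_eqI[of _ _ "(1, 0)"])
  show "S' \<subseteq> W" if W: "subsp W" and SW: "S \<subseteq> W" and wW: "w \<in> W"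
  proof
    fix x assume "x \<in> S'"
    then obtain c s where h: "c \<in> kf" "s \<in> S" "x = c * w + s" unfolding S'_def by auto
    have "c * w \<in> W" by (rule subspD(3)[OF W h(1) wW])
    moreover have "s \<in> W" using h(2) SW by auto
    ultimately show "x \<in> W" using h(3) subspD(2)[OF W] by simp
  qed
qed

lemma subsp_card_aux:
  "subsp W \<Longrightarrow> subsp S \<Longrightarrow> S \<subseteq> W \<Longrightarrow> \<exists>d. card W = card S * (q^2)^d"
proof (induction "card W - card S" arbitrary: S rule: less_induct)
  case less
  show ?case
  proof (cases "S = W")
    case True thus ?thesis by (intro exI[of _ 0]) simp
  next
    case False
    then obtain w where w: "w \<in> W" "w \<notin> S" using less.prems by auto
    define S' where "S' = (\<lambda>(c, s). c * w + s) ` (kf \<times> S)"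
    note ext = subsp_extend[OF less.prems(2) w(2), folded S'_def]
    have "S' \<subseteq> W" using ext(5)[OF less.prems(1) less.prems(3) w(1)] .
    have "card S > 0" using subspD(1)[OF less.prems(2)] by (auto simp: card_gt_0_iff)
    have "1 * card S < q^2 * card S" by (rule mult_strict_right_mono[OF Q_gt1 \<open>card S > 0\<close>])
    hence "card S < card S'" using ext(1) by simp
    moreover have "card S' \<le> card W" by (rule card_mono[OF finite \<open>S' \<subseteq> W\<close>])
    ultimately have "card W - card S' < card W - card S" by linarith
    from less.hyps[OF this less.prems(1) ext(2) \<open>S' \<subseteq> W\<close>] obtain d where
      "card W = card S' * (q^2)^d" by blast
    hence "card W = card S * (q^2)^(Suc d)" using ext(1) by simp
    thus ?thesis by blast
  qed
qed

lemma subsp_card: "subsp W \<Longrightarrow> \<exists>d. card W = (q^2)^d"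
proof -
  assume W: "subsp W"
  have "subsp {0}" by (simp add: subsp_def)
  moreover have "{0} \<subseteq> W" using subspD(1)[OF W] by simp
  ultimately show ?thesis using subsp_card_aux[OF W] by fastforce
qed

end

context ctx
begin

definition herm :: "('a \<Rightarrow> 'a \<Rightarrow> 'a) \<Rightarrow> bool" where
  "herm H \<longleftrightarrow> (\<forall>u w. H u w \<in> kf) \<and> (\<forall>u u' w. H (u + u') w = H u w + H u' w)
     \<and> (\<forall>c\<in>kf. \<forall>u w. H (c * u) w = c * H u w) \<and> (\<forall>u w. H w u = (H u w) ^ q)"

definition rad :: "('a \<Rightarrow> 'a \<Rightarrow> 'a) \<Rightarrow> 'a set \<Rightarrow> 'a set" where
  "rad H W = {w \<in> W. \<forall>x\<in>W. H x w = 0}"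

context
  fixes H :: "'a \<Rightarrow> 'a \<Rightarrow> 'a"
  assumes hH: "herm H"
begin

lemma h_kf: "H u w \<in> kf" using hH unfolding herm_def by blast
lemma h_add1: "H (u + u') w = H u w + H u' w" using hH unfolding herm_def by blast
lemma h_smul1: "c \<in> kf \<Longrightarrow> H (c * u) w = c * H u w" using hH unfolding herm_def by blast
lemma h_sym: "H w u = (H u w) ^ q" using hH unfolding herm_def by blast

lemma h_add2: "H u (w + w') = H u w + H u w'"
proof -
  have "H u (w + w') = (H (w + w') u) ^ q" by (rule h_sym)
  also have "\<dots> = (H w u) ^ q + (H w' u) ^ q" by (simp add: h_add1 frob_add1)
  also have "\<dots> = H u w + H u w'" by (simp add: h_sym[of u w] h_sym[of u w'])
  finally show ?thesis .
qed

lemma h_smul2: "c \<in> kf \<Longrightarrow> H u (c * w) = c ^ q * H u w"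
proof -
  assume c: "c \<in> kf"
  have "H u (c * w) = (H (c * w) u) ^ q" by (rule h_sym)
  also have "\<dots> = c ^ q * (H w u) ^ q" by (simp add: h_smul1[OF c] power_mult_distrib)
  also have "(H w u) ^ q = H u w" by (simp add: h_sym[of u w])
  finally show ?thesis .
qed

lemma h_zero1: "H 0 w = 0"
  using h_add1[of 0 0 w] by (metis add.right_neutral add_left_cancel)

lemma h_zero2: "H u 0 = 0"
  using h_add2[of u 0 0] by (metis add.right_neutral add_left_cancel)

lemma h_neg1: "H (- u) w = - H u w"
proof -
  have "H u w + H (- u) w = 0" using h_add1[of u "-u" w] h_zero1 by simp
  hence "- H u w = H (- u) w" by (simp only: neg_eq_iff_add_eq_0)
  thus ?thesis by simp
qed

lemma h_diff1: "H (u - u') w = H u w - H u' w"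
  using h_add1[of u "-u'" w] h_neg1 by simp

lemma h_diag_Fq: "H u u \<in> Fq"
  using h_sym[of u u] by (simp add: Fq_def)

lemma h_expand: "H (u + w) (u + w) = H u u + H u w + H w u + H w w"
  by (simp add: h_add1 h_add2 algebra_simps)

lemma rad_subsp: "subsp W \<Longrightarrow> subsp (rad H W)"
proof -
  assume W: "subsp W"
  have "0 \<in> rad H W" using subspD(1)[OF W] h_zero2 by (simp add: rad_def)
  moreover have "x + y \<in> rad H W" if "x \<in> rad H W" "y \<in> rad H W" for x y
    using that subspD(2)[OF W] by (simp add: rad_def h_add2)
  moreover have "c * x \<in> rad H W" if "c \<in> kf" "x \<in> rad H W" for c x
    using that subspD(3)[OF W] by (simp add: rad_def h_smul2)
  ultimately show ?thesis unfolding subsp_def by blast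
qed

lemma exists_nonFq: "\<exists>c\<in>kf. c ^ q \<noteq> c"
proof (rule ccontr)
  assume "\<not> ?thesis"
  hence "kf \<subseteq> Fq" by (auto simp: Fq_def)
  hence "card kf \<le> card Fq" by (intro card_mono) auto
  hence "q^2 \<le> q" using card_kf card_Fq by simp
  thus False using q_ge2 by (simp add: power2_eq_square)
qed

lemma exists_aniso:
  assumes W: "subsp W" and ne: "rad H W \<noteq> W"
  shows "\<exists>u\<in>W. H u u \<noteq> 0"
proof (rule ccontr)
  assume "\<not> ?thesis"
  hence z: "\<And>u. u \<in> W \<Longrightarrow> H u u = 0" by blast
  obtain c where c: "c \<in> kf" "c ^ q \<noteq> c" using exists_nonFq by blast
  have "H x w = 0" if x: "x \<in> W" and w: "w \<in> W" for x w
  proof -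
    define h where "h = H x w"
    have hwx: "H w x = h ^ q" unfolding h_def by (rule h_sym)
    have "H (x + w) (x + w) = 0" using z subspD(2)[OF W x w] by blast
    hence e1: "h + h ^ q = 0" using z[OF x] z[OF w] hwx h_expand[of x w] by (simp add: h_def)
    have cx: "c * x \<in> W" by (rule subspD(3)[OF W c(1) x])
    have "H (c * x + w) (c * x + w) = 0" using z subspD(2)[OF W cx w] by blast
    moreover have "H (c * x) (c * x) = 0" using z cx by blast
    moreover have "H (c * x) w = c * h" using h_smul1[OF c(1)] by (simp add: h_def)
    moreover have "H w (c * x) = c ^ q * h ^ q"
      using h_smul2[OF c(1), of w x] hwx by simp
    ultimately have "c * h + c ^ q * h ^ q = 0" using z[OF w] h_expand[of "c * x" w] by simp
    moreover have "h ^ q = - h" using e1 by (simp add: eq_neg_iff_add_eq_0 add.commute)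
    ultimately have "(c - c ^ q) * h = 0" by (simp add: algebra_simps)
    thus ?thesis using c(2) by (simp add: h_def)
  qed
  hence "rad H W = W" by (auto simp: rad_def)
  with ne show False by simp
qed

lemma value_card_le:
  assumes W: "subsp W" and a: "aa \<in> Fq" "aa \<noteq> 0" and b: "bb \<in> Fq" "bb \<noteq> 0"
  shows "card {w \<in> W. H w w = aa} \<le> card {w \<in> W. H w w = bb}"
proof -
  have "bb / aa \<in> Fq" "bb / aa \<noteq> 0" using a b Fq_divide by auto
  then obtain l where l: "l \<in> kf" "l \<noteq> 0" "l ^ (q+1) = bb / aa" using norm_surj by blast
  have "(\<lambda>w. l * w) ` {w \<in> W. H w w = aa} \<subseteq> {w \<in> W. H w w = bb}"
  proof
    fix y assume "y \<in> (\<lambda>w. l * w) ` {w \<in> W. H w w = aa}"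
    then obtain w where w: "w \<in> W" "H w w = aa" "y = l * w" by auto
    have "H y y = l * (l ^ q * aa)" using w h_smul1[OF l(1)] h_smul2[OF l(1)] by simp
    also have "\<dots> = l ^ (q+1) * aa" by (simp add: algebra_simps)
    also have "\<dots> = bb" using l(3) a by simp
    finally show "y \<in> {w \<in> W. H w w = bb}" using w subspD(3)[OF W l(1)] by simp
  qed
  moreover have "inj_on (\<lambda>w. l * w) {w \<in> W. H w w = aa}" using l(2) by (intro inj_onI) simp
  ultimately show ?thesis by (intro card_inj_on_le) auto
qed

lemma value_card_eq:
  assumes W: "subsp W" and a: "aa \<in> Fq" "aa \<noteq> 0" and b: "bb \<in> Fq" "bb \<noteq> 0"
  shows "card {w \<in> W. H w w = aa} = card {w \<in> W. H w w = bb}"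
  using value_card_le[OF W a b] value_card_le[OF W b a] by simp

lemma value_sum:
  assumes W: "subsp W"
  shows "int (card W) = int (card {w \<in> W. H w w = 0}) + (int q - 1) * int (card {w \<in> W. H w w = 1})"
proof -
  have "card W = (\<Sum>b\<in>Fq. card {w \<in> W. H w w = b})"
    by (rule card_fiber_sum) (auto simp: h_diag_Fq)
  also have "\<dots> = card {w \<in> W. H w w = 0} + (\<Sum>b\<in>Fq - {0}. card {w \<in> W. H w w = b})"
    by (subst sum.remove[OF _ Fq_0]) auto
  also have "(\<Sum>b\<in>Fq - {0}. card {w \<in> W. H w w = b}) = (\<Sum>b\<in>Fq - {0}. card {w \<in> W. H w w = 1})"
    by (rule sum.cong[OF refl]) (rule value_card_eq[OF W], auto simp: Fq_1)
  also have "\<dots> = (q - 1) * card {w \<in> W. H w w = 1}"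
    using card_Fq by (simp add: card_Diff_singleton Fq_0)
  finally show ?thesis using q_ge2 by (simp add: of_nat_diff)
qed


lemma herm_count_triv:
  assumes W: "subsp W" and cW: "card W = (q^2)^d" and cR: "card (rad H W) = (q^2)^e"
    and R: "rad H W = W"
  shows "e \<le> d \<and> int q * int (card {w \<in> W. H w w = 0})
           = int q ^ (2*d) + (-1) ^ (d - e) * (int q - 1) * int q ^ (d + e)"
proof -
  have "e = d" using cW cR R Qpow_inj by simp
  have "{w \<in> W. H w w = 0} = W"
  proof
    show "W \<subseteq> {w \<in> W. H w w = 0}"
    proof
      fix w assume "w \<in> W"
      hence "w \<in> rad H W" using R by simp
      thus "w \<in> {w \<in> W. H w w = 0}" by (auto simp: rad_def)
    qed
  qed auto
  hence Z: "int (card {w \<in> W. H w w = 0}) = int q ^ (2*d)" using cW by (simp add: power_mult)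
  have "d + e = 2 * d" "d - e = 0" using \<open>e = d\<close> by simp_all
  hence "int q ^ (2*d) + (-1) ^ (d - e) * (int q - 1) * int q ^ (d + e) = int q * int q ^ (2*d)"
    by (simp add: algebra_simps mult_2 mult_2_right)
  thus ?thesis using Z \<open>e = d\<close> by simp
qed

context
  fixes W W' u0
  assumes W: "subsp W" and u0: "u0 \<in> W" and f0: "H u0 u0 \<noteq> 0"
    and W'_def: "W' = {w \<in> W. H w u0 = 0}"
begin

lemma dec_subsp: "subsp W'"
proof -
  have "0 \<in> W'" using subspD(1)[OF W] h_zero1 by (simp add: W'_def)
  moreover have "x + y \<in> W'" if "x \<in> W'" "y \<in> W'" for x y
    using that subspD(2)[OF W] by (simp add: W'_def h_add1)
  moreover have "c * x \<in> W'" if "c \<in> kf" "x \<in> W'" for c x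
    using that subspD(3)[OF W] by (simp add: W'_def h_smul1)
  ultimately show ?thesis unfolding subsp_def by blast
qed

lemma dec_sub: "W' \<subseteq> W" by (auto simp: W'_def)

lemma dec_inj: "inj_on (\<lambda>(c, w). c * u0 + w) (kf \<times> W')"
proof (rule inj_onI, clarify)
  fix c w c' w' assume h: "c \<in> kf" "w \<in> W'" "c' \<in> kf" "w' \<in> W'" "c * u0 + w = c' * u0 + w'"
  have "H (c * u0 + w) u0 = c * H u0 u0" using h(1,2) by (simp add: h_add1 h_smul1 W'_def)
  moreover have "H (c' * u0 + w') u0 = c' * H u0 u0" using h(3,4) by (simp add: h_add1 h_smul1 W'_def)
  moreover have e: "H (c * u0 + w) u0 = H (c' * u0 + w') u0" by (simp only: h(5))
  ultimately have "c * H u0 u0 = c' * H u0 u0" by (simp only:)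
  hence "c = c'" using f0 by (metis mult_right_cancel)
  thus "c = c' \<and> w = w'" using h(5) by simp
qed

lemma dec_img: "(\<lambda>(c, w). c * u0 + w) ` (kf \<times> W') = W"
proof
  show "(\<lambda>(c, w). c * u0 + w) ` (kf \<times> W') \<subseteq> W"
    using subspD(2,3)[OF W] u0 dec_sub by auto
  show "W \<subseteq> (\<lambda>(c, w). c * u0 + w) ` (kf \<times> W')"
  proof
    fix x assume x: "x \<in> W"
    define c where "c = H x u0 / H u0 u0"
    have c: "c \<in> kf" unfolding c_def using h_kf kf_divide by blast
    have "x - c * u0 \<in> W" using subspD(5)[OF W x subspD(3)[OF W c u0]] .
    moreover have "H (x - c * u0) u0 = 0"
    proof -
      have "c * H u0 u0 = H x u0" using f0 by (simp add: c_def)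
      moreover have "H (x - c * u0) u0 = H x u0 - c * H u0 u0" by (simp add: h_diff1 h_smul1[OF c])
      ultimately show ?thesis by simp
    qed
    ultimately have "x - c * u0 \<in> W'" by (simp add: W'_def)
    moreover have "x = c * u0 + (x - c * u0)" by simp
    ultimately show "x \<in> (\<lambda>(c, w). c * u0 + w) ` (kf \<times> W')" using c by force
  qed
qed

lemma dec_decomp: "x \<in> W \<Longrightarrow> \<exists>c w1. c \<in> kf \<and> w1 \<in> W' \<and> x = c * u0 + w1"
proof -
  assume "x \<in> W"
  hence "x \<in> (\<lambda>(c, w). c * u0 + w) ` (kf \<times> W')" using dec_img by simp
  thus ?thesis by auto
qed

lemma dec_card: "card W = q^2 * card W'"
proof -
  have "card W = card (kf \<times> W')" using card_image[OF dec_inj] dec_img by simp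
  thus ?thesis by (simp add: card_cartesian_product card_kf)
qed

lemma dec_rad: "rad H W' = rad H W"
proof
  show "rad H W' \<subseteq> rad H W"
  proof
    fix w assume w: "w \<in> rad H W'"
    hence wW': "w \<in> W'" and hw: "\<And>x. x \<in> W' \<Longrightarrow> H x w = 0" by (auto simp: rad_def)
    have "H x w = 0" if x: "x \<in> W" for x
    proof -
      obtain c w1 where cw: "c \<in> kf" "w1 \<in> W'" "x = c * u0 + w1" using dec_decomp x by blast
      have "H u0 w = (H w u0) ^ q" by (rule h_sym)
      also have "H w u0 = 0" using wW' by (simp add: W'_def)
      finally have "H u0 w = 0" by simp
      thus ?thesis using cw hw[OF cw(2)] by (simp add: h_add1 h_smul1)
    qed
    thus "w \<in> rad H W" using wW' dec_sub by (auto simp: rad_def)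
  qed
  show "rad H W \<subseteq> rad H W'"
  proof
    fix w assume w: "w \<in> rad H W"
    hence wW: "w \<in> W" and hw: "\<And>x. x \<in> W \<Longrightarrow> H x w = 0" by (auto simp: rad_def)
    have "H w u0 = (H u0 w) ^ q" by (rule h_sym)
    also have "H u0 w = 0" using hw u0 by simp
    finally have "w \<in> W'" using wW by (simp add: W'_def)
    thus "w \<in> rad H W'" using hw dec_sub by (auto simp: rad_def)
  qed
qed

lemma dec_expand:
  assumes c: "c \<in> kf" and w: "w \<in> W'"
  shows "H (c * u0 + w) (c * u0 + w) = c ^ (q+1) * H u0 u0 + H w w"
proof -
  have hw: "H w u0 = 0" using w by (simp add: W'_def)
  have "H u0 w = (H w u0) ^ q" by (rule h_sym)
  hence hu: "H u0 w = 0" using hw by simp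
  have "H (c * u0 + w) (c * u0 + w) = H (c * u0) (c * u0) + H (c * u0) w + H w (c * u0) + H w w"
    by (rule h_expand)
  also have "H (c * u0) (c * u0) = c * (c ^ q * H u0 u0)" by (simp add: h_smul1[OF c] h_smul2[OF c])
  also have "H (c * u0) w = 0" by (simp add: h_smul1[OF c] hu)
  also have "H w (c * u0) = 0" by (simp add: h_smul2[OF c] hw)
  finally show ?thesis by (simp add: algebra_simps)
qed

lemma dec_count:
  "card {w \<in> W. H w w = 0} = card {w \<in> W'. H w w = 0} + (q^2 - 1) * card {w \<in> W'. H w w = 1}"
proof -
  let ?phi = "\<lambda>(c, w). c * u0 + w"
  let ?S = "SIGMA c:kf. {w \<in> W'. H (c * u0 + w) (c * u0 + w) = 0}"
  have S_sub: "?S \<subseteq> kf \<times> W'" by auto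
  have "{w \<in> W. H w w = 0} = ?phi ` ?S"
  proof
    show "?phi ` ?S \<subseteq> {w \<in> W. H w w = 0}" using dec_img by auto
    show "{w \<in> W. H w w = 0} \<subseteq> ?phi ` ?S"
    proof
      fix x assume x: "x \<in> {w \<in> W. H w w = 0}"
      then obtain c w1 where cw: "c \<in> kf" "w1 \<in> W'" "x = c * u0 + w1" using dec_decomp by blast
      hence "(c, w1) \<in> ?S" using x by simp
      thus "x \<in> ?phi ` ?S" using cw by force
    qed
  qed
  hence "card {w \<in> W. H w w = 0} = card ?S"
    using card_image[OF inj_on_subset[OF dec_inj S_sub]] by simp
  also have "\<dots> = (\<Sum>c\<in>kf. card {w \<in> W'. H (c * u0 + w) (c * u0 + w) = 0})"
    by (rule card_SigmaI) auto
  also have "\<dots> = (\<Sum>c\<in>kf. card {w \<in> W'. H w w = - (c ^ (q+1) * H u0 u0)})"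
  proof (rule sum.cong[OF refl])
    fix c assume c: "c \<in> kf"
    have "{w \<in> W'. H (c * u0 + w) (c * u0 + w) = 0} = {w \<in> W'. H w w = - (c ^ (q+1) * H u0 u0)}"
    proof (rule Collect_cong)
      fix w
      show "(w \<in> W' \<and> H (c * u0 + w) (c * u0 + w) = 0) = (w \<in> W' \<and> H w w = - (c ^ (q+1) * H u0 u0))"
      proof (cases "w \<in> W'")
        case True
        hence ex: "H (c * u0 + w) (c * u0 + w) = c ^ (q+1) * H u0 u0 + H w w" by (rule dec_expand[OF c])
        show ?thesis using True by (simp only: ex add_eq_0_iff simp_thms)
      qed simp
    qed
    thus "card {w \<in> W'. H (c * u0 + w) (c * u0 + w) = 0} = card {w \<in> W'. H w w = - (c ^ (q+1) * H u0 u0)}"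
      by simp
  qed
  also have "\<dots> = card {w \<in> W'. H w w = 0} + (\<Sum>c\<in>kf - {0}. card {w \<in> W'. H w w = - (c ^ (q+1) * H u0 u0)})"
    by (subst sum.remove[OF _ kf_0]) auto
  also have "(\<Sum>c\<in>kf - {0}. card {w \<in> W'. H w w = - (c ^ (q+1) * H u0 u0)}) = (\<Sum>c\<in>kf - {0}. card {w \<in> W'. H w w = 1})"
  proof (rule sum.cong[OF refl])
    fix c assume c: "c \<in> kf - {0}"
    have "c ^ (q+1) \<in> Fq" using c by (intro norm_in_Fq) simp
    hence "- (c ^ (q+1) * H u0 u0) \<in> Fq" by (intro Fq_minus Fq_mult h_diag_Fq) assumption
    moreover have "- (c ^ (q+1) * H u0 u0) \<noteq> 0" using c f0 by simp
    ultimately show "card {w \<in> W'. H w w = - (c ^ (q+1) * H u0 u0)} = card {w \<in> W'. H w w = 1}"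
      by (rule value_card_eq[OF dec_subsp]) (simp_all add: Fq_1)
  qed
  also have "\<dots> = (q^2 - 1) * card {w \<in> W'. H w w = 1}" using kf_minus0_card by simp
  finally show ?thesis .
qed

end

lemma herm_count:
  "subsp W \<Longrightarrow> card W = (q^2)^d \<Longrightarrow> card (rad H W) = (q^2)^e \<Longrightarrow>
   e \<le> d \<and> int q * int (card {w \<in> W. H w w = 0})
           = int q ^ (2*d) + (-1) ^ (d - e) * (int q - 1) * int q ^ (d + e)"
proof (induction d arbitrary: W e)
  case 0
  show ?case
  proof (cases "rad H W = W")
    case True thus ?thesis using herm_count_triv 0 by blast
  next
    case False
    then obtain u0 where u0: "u0 \<in> W" "H u0 u0 \<noteq> 0" using exists_aniso[OF 0(1)] by blast
    have "card W = q^2 * card {w \<in> W. H w u0 = 0}" by (rule dec_card[OF 0(1) u0 refl])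
    hence "q^2 * card {w \<in> W. H w u0 = 0} = 1" using 0 by simp
    thus ?thesis using Q_gt1 by simp
  qed
next
  case (Suc d)
  show ?case
  proof (cases "rad H W = W")
    case True thus ?thesis using herm_count_triv Suc.prems by blast
  next
    case False
    then obtain u0 where u0: "u0 \<in> W" "H u0 u0 \<noteq> 0" using exists_aniso[OF Suc.prems(1)] by blast
    define W' where "W' = {w \<in> W. H w u0 = 0}"
    note dec = dec_subsp[OF Suc.prems(1) u0 W'_def] dec_card[OF Suc.prems(1) u0 W'_def]
      dec_rad[OF Suc.prems(1) u0 W'_def] dec_count[OF Suc.prems(1) u0 W'_def]
    have "q^2 \<noteq> 0" using Q_gt1 by linarith
    moreover have "q^2 * card W' = q^2 * (q^2)^d" using dec(2) Suc.prems(2) by (metis power_Suc)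
    ultimately have cW': "card W' = (q^2)^d" using mult_left_cancel by blast
    have cR': "card (rad H W') = (q^2)^e" using dec(3) Suc.prems(3) by simp
    from Suc.IH[OF dec(1) cW' cR'] have ed: "e \<le> d"
      and IH: "int q * int (card {w \<in> W'. H w w = 0}) = int q ^ (2*d) + (-1) ^ (d - e) * (int q - 1) * int q ^ (d + e)"
      by auto
    define X where "X = int q"
    define Z where "Z = int (card {w \<in> W. H w w = 0})"
    define Z' where "Z' = int (card {w \<in> W'. H w w = 0})"
    define C where "C = int (card {w \<in> W'. H w w = 1})"
    define P where "P = X ^ (2*d)"
    define R where "R = X ^ (d + e)"
    define s where "s = ((-1)::int) ^ (d - e)"
    have hZ: "Z = Z' + (X^2 - 1) * C"
      using dec(4) Q_gt1 by (simp add: Z_def Z'_def C_def X_def of_nat_diff)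
    have hC: "P = Z' + (X - 1) * C"
      using value_sum[OF dec(1)] cW' by (simp add: P_def Z'_def C_def X_def power_mult)
    have hI: "X * Z' = P + s * (X - 1) * R" using IH by (simp add: X_def Z'_def P_def s_def R_def)
    have "X * Z = X * (Z' + (X^2 - 1) * C)" using hZ by simp
    also have "\<dots> = X * Z' + X * (X + 1) * ((X - 1) * C)" by (simp add: algebra_simps power2_eq_square)
    also have "\<dots> = X * Z' + X * (X + 1) * (P - Z')" using hC by simp
    also have "\<dots> = X * (X + 1) * P - X * (X * Z')" by (simp add: algebra_simps)
    also have "\<dots> = X * (X + 1) * P - X * (P + s * (X - 1) * R)" using hI by simp
    also have "\<dots> = X^2 * P + (- s) * (X - 1) * (X * R)" by (simp add: algebra_simps power2_eq_square)
    finally have fin: "X * Z = X^2 * P + (- s) * (X - 1) * (X * R)" .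
    have e1: "X ^ (2 * Suc d) = X^2 * P" by (simp add: P_def power_add power2_eq_square)
    have e2: "X ^ (Suc d + e) = X * R" by (simp add: R_def)
    have e3: "(-1::int) ^ (Suc d - e) = - s" using ed by (simp add: s_def Suc_diff_le)
    have main: "X * Z = X ^ (2 * Suc d) + (-1) ^ (Suc d - e) * (X - 1) * X ^ (Suc d + e)"
      unfolding e1 e2 e3 using fin by simp
    have "e \<le> Suc d" using ed by simp
    with main[unfolded X_def Z_def] show ?thesis by blast
  qed
qed

end
end

lemma sparse_poly_roots:
  fixes g :: "nat \<Rightarrow> 'a::field"
  assumes I: "finite I" and inj: "inj_on e I" and i0: "i0 \<in> I" "g i0 \<noteq> 0"
    and le: "\<And>i. i \<in> I \<Longrightarrow> e i \<le> e i0"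
  shows "card {x. (\<Sum>i\<in>I. g i * x ^ e i) = 0} \<le> e i0"
proof -
  define P where "P = (\<Sum>i\<in>I. monom (g i) (e i))"
  have ev: "poly P x = (\<Sum>i\<in>I. g i * x ^ e i)" for x by (simp add: P_def poly_sum poly_monom)
  have "coeff P (e i0) = (\<Sum>i\<in>I. if e i = e i0 then g i else 0)" by (simp add: P_def coeff_sum)
  also have "\<dots> = (\<Sum>i\<in>{i0}. g i)"
  proof (rule sum.mono_neutral_cong_right)
    show "\<forall>i\<in>I - {i0}. (if e i = e i0 then g i else 0) = 0"
      using inj i0(1) by (auto dest: inj_onD)
  qed (use I i0 in auto)
  finally have "coeff P (e i0) = g i0" by simp
  hence P0: "P \<noteq> 0" using i0(2) by auto
  have "degree P \<le> e i0" unfolding P_def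
    by (rule degree_sum_le[OF I]) (rule order.trans[OF degree_monom_le le])
  moreover have "card {x. (\<Sum>i\<in>I. g i * x ^ e i) = 0} \<le> degree P"
    by (rule roots_card_le[OF P0]) (simp add: ev)
  ultimately show ?thesis by simp
qed


lemma sparse_poly_roots2:
  fixes g1 g2 :: "nat \<Rightarrow> 'a::field"
  assumes I: "finite I" and i0: "i0 \<in> I" "g2 i0 \<noteq> 0"
    and h1: "\<And>i. i \<in> I \<Longrightarrow> e1 i \<noteq> e2 i0 \<and> e1 i \<le> e2 i0"
    and h2: "\<And>i. i \<in> I \<Longrightarrow> e2 i \<le> e2 i0 \<and> (e2 i = e2 i0 \<longrightarrow> i = i0)"
  shows "card {x. (\<Sum>i\<in>I. g1 i * x ^ e1 i + g2 i * x ^ e2 i) = 0} \<le> e2 i0"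
proof -
  define P where "P = (\<Sum>i\<in>I. monom (g1 i) (e1 i) + monom (g2 i) (e2 i))"
  have ev: "poly P x = (\<Sum>i\<in>I. g1 i * x ^ e1 i + g2 i * x ^ e2 i)" for x
    by (simp add: P_def poly_sum poly_monom)
  have "coeff P (e2 i0) = (\<Sum>i\<in>I. (if e2 i = e2 i0 then g2 i else 0))"
    using h1 by (simp add: P_def coeff_sum)
  also have "\<dots> = (\<Sum>i\<in>{i0}. g2 i)"
  proof (rule sum.mono_neutral_cong_right)
    show "\<forall>i\<in>I - {i0}. (if e2 i = e2 i0 then g2 i else 0) = 0"
      using h2 by auto
  qed (use I i0 in auto)
  finally have "coeff P (e2 i0) = g2 i0" by simp
  hence P0: "P \<noteq> 0" using i0(2) by auto
  have "degree P \<le> e2 i0" unfolding P_def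
  proof (rule degree_sum_le[OF I])
    fix i assume i: "i \<in> I"
    show "degree (monom (g1 i) (e1 i) + monom (g2 i) (e2 i)) \<le> e2 i0"
      by (rule order.trans[OF degree_add_le_max])
         (use h1[OF i] h2[OF i] degree_monom_le[of "g1 i" "e1 i"] degree_monom_le[of "g2 i" "e2 i"] in auto)
  qed
  moreover have "card {x. (\<Sum>i\<in>I. g1 i * x ^ e1 i + g2 i * x ^ e2 i) = 0} \<le> degree P"
    by (rule roots_card_le[OF P0]) (simp add: ev)
  ultimately show ?thesis by simp
qed

lemma sum_shift_cyclic:
  fixes f :: "nat \<Rightarrow> 'a::ab_group_add"
  assumes "f n = f 0"
  shows "(\<Sum>j<n. f (Suc j)) = (\<Sum>j<n. f j)"
proof -
  have "f 0 + (\<Sum>j<n. f (Suc j)) = (\<Sum>j<Suc n. f j)" by (rule sum.lessThan_Suc_shift[symmetric])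
  also have "\<dots> = f 0 + (\<Sum>j<n. f j)" using assms by (simp add: add.commute)
  finally show ?thesis by simp
qed

context ctx
begin

abbreviation TrK :: "'a \<Rightarrow> 'a" where "TrK \<equiv> Tr q n"

lemma Tr_alt: "TrK x = (\<Sum>j<n. x ^ ((q^2)^j))"
  by (simp add: Tr_def power_mult)

lemma pow_Q_Suc: "(x::'a) ^ ((q^2)^(Suc j)) = (x ^ ((q^2)^j)) ^ (q^2)"
  by (simp only: power_Suc2 power_mult)

lemma pow_Q_comm: "((x::'a) ^ ((q^2)^j)) ^ (q^2) = (x ^ (q^2)) ^ ((q^2)^j)"
  by (simp only: power_mult[symmetric] mult.commute)

lemma Tr_Q: "TrK (x ^ (q^2)) = TrK x"
proof -
  have "TrK (x ^ (q^2)) = (\<Sum>j<n. x ^ ((q^2)^(Suc j)))"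
    unfolding Tr_alt by (simp only: pow_Q_Suc pow_Q_comm)
  also have "\<dots> = (\<Sum>j<n. x ^ ((q^2)^j))"
    by (rule sum_shift_cyclic[where f = "\<lambda>j. x ^ ((q^2)^j)"]) (simp add: pow_Qn)
  finally show ?thesis by (simp add: Tr_alt)
qed

lemma Tr_pow_Q: "(TrK x) ^ (q^2) = TrK (x ^ (q^2))"
proof -
  have "(TrK x) ^ (q^2) = (\<Sum>j<n. (x ^ ((q^2)^j)) ^ (q^2))"
    unfolding Tr_alt using frob_sum[of "\<lambda>j. x ^ ((q^2)^j)" "{..<n}" 2] by simp
  also have "\<dots> = TrK (x ^ (q^2))" unfolding Tr_alt by (simp only: pow_Q_comm)
  finally show ?thesis .
qed

lemma Tr_kf: "TrK x \<in> kf"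
  using Tr_pow_Q Tr_Q by (simp add: kf_iff)

lemma Tr_Qj: "TrK (x ^ ((q^2)^j)) = TrK x"
proof (induction j)
  case (Suc j)
  have "TrK (x ^ ((q^2)^Suc j)) = TrK ((x ^ ((q^2)^j)) ^ (q^2))" by (simp only: pow_Q_Suc)
  also have "\<dots> = TrK x" using Suc by (simp only: Tr_Q)
  finally show ?case .
qed simp

lemma Tr_q: "TrK (x ^ q) = (TrK x) ^ q"
proof -
  have "(TrK x) ^ q = (\<Sum>j<n. (x ^ ((q^2)^j)) ^ q)"
    unfolding Tr_alt using frob_sum[of "\<lambda>j. x ^ ((q^2)^j)" "{..<n}" 1] by simp
  also have "\<dots> = TrK (x ^ q)" unfolding Tr_alt by (simp only: power_mult[symmetric] mult.commute)
  finally show ?thesis by simp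
qed

lemma Tr_0[simp]: "TrK 0 = 0"
  unfolding Tr_def by (rule sum.neutral) (simp add: zero_power)

lemma Tr_add: "TrK (x + y) = TrK x + TrK y"
  unfolding Tr_def by (simp add: frob_add sum.distrib)

lemma Tr_sum: "TrK (\<Sum>i\<in>A. g i) = (\<Sum>i\<in>A. TrK (g i))"
proof -
  have "TrK (\<Sum>i\<in>A. g i) = (\<Sum>j<n. \<Sum>i\<in>A. (g i) ^ (q ^ (2*j)))"
    unfolding Tr_def by (simp add: frob_sum)
  also have "\<dots> = (\<Sum>i\<in>A. TrK (g i))" unfolding Tr_def by (rule sum.swap)
  finally show ?thesis .
qed

lemma Tr_smul: "c \<in> kf \<Longrightarrow> TrK (c * x) = c * TrK x"
  unfolding Tr_alt by (simp add: power_mult_distrib kf_pow_Q sum_distrib_left)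

lemma Tr_exists_nonzero: "\<exists>x. TrK x \<noteq> 0"
proof (rule ccontr)
  assume "\<not> ?thesis"
  hence all: "TrK x = 0" for x by simp
  have "card {x::'a. (\<Sum>j\<in>{..<n}. 1 * x ^ ((q^2)^j)) = 0} \<le> (q^2)^(n-1)"
  proof (rule sparse_poly_roots)
    show "inj_on (\<lambda>j. (q^2)^j) {..<n}" by (rule inj_onI) (simp add: Qpow_inj)
    show "n - 1 \<in> {..<n}" using n_pos by simp
    show "(q^2)^j \<le> (q^2)^(n-1)" if "j \<in> {..<n}" for j
      using that Q_gt1 by (intro power_increasing) auto
  qed auto
  moreover have "{x::'a. (\<Sum>j\<in>{..<n}. 1 * x ^ ((q^2)^j)) = 0} = UNIV"
    using all by (simp add: Tr_alt)
  ultimately have "q^(2*n) \<le> (q^2)^(n-1)" using card_UNIV by simp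
  moreover have "(q^2)^(n-1) < (q^2)^n" using Q_gt1 n_pos by (intro power_strict_increasing) auto
  ultimately show False by (simp add: power_mult)
qed

lemma Tr_nondeg: "(\<And>u. TrK (u * z) = 0) \<Longrightarrow> z = 0"
proof (rule ccontr)
  assume h: "\<And>u. TrK (u * z) = 0" and z: "z \<noteq> 0"
  obtain x where x: "TrK x \<noteq> 0" using Tr_exists_nonzero by blast
  have "TrK (x / z * z) = 0" by (rule h)
  thus False using x z by simp
qed


abbreviation LL :: "'a \<Rightarrow> 'a" where "LL \<equiv> linpoly q n a"
abbreviation LS :: "'a \<Rightarrow> 'a" where "LS \<equiv> linpoly_star q n a"

lemma L_add: "LL (x + y) = LL x + LL y"
  unfolding linpoly_def by (simp add: frob_add sum.distrib algebra_simps)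

lemma L_smul: "c \<in> kf \<Longrightarrow> LL (c * x) = c * LL x"
proof -
  assume c: "c \<in> kf"
  have "c ^ (q ^ (2*i)) = c" for i using kf_pow_Q[OF c, of i] by (simp add: power_mult)
  thus ?thesis unfolding linpoly_def by (simp add: power_mult_distrib sum_distrib_left algebra_simps)
qed

lemma LS_add: "LS (x + y) = LS x + LS y"
  unfolding linpoly_star_def by (simp add: frob_add sum.distrib algebra_simps)

lemma LS_smul: "c \<in> kf \<Longrightarrow> LS (c * x) = c * LS x"
proof -
  assume c: "c \<in> kf"
  have cc: "c ^ (q ^ (2*i)) = c" for i using kf_pow_Q[OF c, of i] by (simp add: power_mult)
  have "(a i ^ q * (c * x)) ^ (q ^ (2*j)) = c * (a i ^ q * x) ^ (q ^ (2*j))" for i j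
    using cc[of j] by (simp add: power_mult_distrib algebra_simps)
  thus ?thesis unfolding linpoly_star_def by (simp add: sum_distrib_left)
qed

lemma exp_shift: "q * q ^ (2*i) * q = (q^2) ^ (Suc i)"
proof -
  have "(q^2) ^ (Suc i) = q ^ (2 * Suc i)" by (simp only: power_mult)
  also have "2 * Suc i = Suc (Suc (2 * i))" by simp
  finally show ?thesis by (simp only: power_Suc mult.commute mult.left_commute)
qed

lemma L_pow_q: "(LL (x ^ q)) ^ q = (\<Sum>i<n. a i ^ q * x ^ ((q^2) ^ Suc i))"
proof -
  have "(LL (x ^ q)) ^ q = (\<Sum>i<n. (a i * (x ^ q) ^ (q ^ (2*i))) ^ q)"
    unfolding linpoly_def by (rule frob_sum1)
  also have "\<dots> = (\<Sum>i<n. a i ^ q * x ^ ((q^2) ^ Suc i))"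
  proof (rule sum.cong[OF refl])
    fix i
    have "((x ^ q) ^ (q ^ (2*i))) ^ q = x ^ (q * q ^ (2*i) * q)" by (simp only: power_mult)
    thus "(a i * (x ^ q) ^ (q ^ (2*i))) ^ q = a i ^ q * x ^ ((q^2) ^ Suc i)"
      by (simp only: power_mult_distrib exp_shift)
  qed
  finally show ?thesis .
qed

lemma Tr_shift_term:
  assumes i: "i < n"
  shows "TrK (y * x ^ ((q^2) ^ Suc i)) = TrK (x * y ^ ((q^2) ^ (n - Suc i)))"
proof -
  have "TrK (y * x ^ ((q^2) ^ Suc i)) = TrK ((y * x ^ ((q^2) ^ Suc i)) ^ ((q^2) ^ (n - Suc i)))"
    by (rule Tr_Qj[symmetric])
  also have "(y * x ^ ((q^2) ^ Suc i)) ^ ((q^2) ^ (n - Suc i))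
      = y ^ ((q^2) ^ (n - Suc i)) * x ^ ((q^2) ^ Suc i * (q^2) ^ (n - Suc i))"
    by (simp only: power_mult_distrib power_mult)
  also have "(q^2) ^ Suc i * (q^2) ^ (n - Suc i) = (q^2) ^ n"
    using i by (simp only: power_add[symmetric]) simp
  also have "x ^ ((q^2) ^ n) = x" by (rule pow_Qn)
  finally show ?thesis by (simp add: mult.commute)
qed

lemma adjoint: "(TrK (w * LL (x ^ q))) ^ q = TrK (x * LS (w ^ q))"
proof -
  have "(TrK (w * LL (x ^ q))) ^ q = TrK ((w * LL (x ^ q)) ^ q)" by (simp add: Tr_q)
  also have "(w * LL (x ^ q)) ^ q = (\<Sum>i<n. (w ^ q * a i ^ q) * x ^ ((q^2) ^ Suc i))"
    by (simp add: power_mult_distrib L_pow_q sum_distrib_left mult.assoc)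
  also have "TrK (\<Sum>i<n. (w ^ q * a i ^ q) * x ^ ((q^2) ^ Suc i))
      = (\<Sum>i<n. TrK ((w ^ q * a i ^ q) * x ^ ((q^2) ^ Suc i)))" by (rule Tr_sum)
  also have "\<dots> = (\<Sum>i<n. TrK (x * (a i ^ q * w ^ q) ^ (q ^ (2 * (n - i - 1)))))"
  proof (rule sum.cong[OF refl])
    fix i assume "i \<in> {..<n}"
    hence i: "i < n" by simp
    have "q ^ (2 * (n - i - 1)) = (q^2) ^ (n - Suc i)" by (simp add: power_mult)
    thus "TrK ((w ^ q * a i ^ q) * x ^ ((q^2) ^ Suc i)) = TrK (x * (a i ^ q * w ^ q) ^ (q ^ (2 * (n - i - 1))))"
      using Tr_shift_term[OF i] by (simp add: mult.commute)
  qed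
  also have "\<dots> = TrK (x * LS (w ^ q))"
    unfolding linpoly_star_def by (simp add: sum_distrib_left Tr_sum)
  finally show ?thesis .
qed


definition Bf :: "'a \<Rightarrow> 'a \<Rightarrow> 'a" where "Bf u w = TrK (u * LL (w ^ q))"
definition Hth :: "'a \<Rightarrow> 'a \<Rightarrow> 'a \<Rightarrow> 'a" where "Hth t u w = t * Bf u w + t ^ q * (Bf w u) ^ q"

lemma Bf_kf: "Bf u w \<in> kf" by (simp add: Bf_def Tr_kf)

lemma Bf_add1: "Bf (u + u') w = Bf u w + Bf u' w"
  by (simp add: Bf_def algebra_simps Tr_add)

lemma Bf_add2: "Bf u (w + w') = Bf u w + Bf u w'"
  by (simp add: Bf_def frob_add1 L_add algebra_simps Tr_add)

lemma Bf_smul1: "c \<in> kf \<Longrightarrow> Bf (c * u) w = c * Bf u w"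
  by (simp add: Bf_def mult.assoc Tr_smul)

lemma Bf_smul2: "c \<in> kf \<Longrightarrow> Bf u (c * w) = c ^ q * Bf u w"
proof -
  assume c: "c \<in> kf"
  have "c ^ q \<in> kf" using c by (rule kf_power)
  hence "LL ((c * w) ^ q) = c ^ q * LL (w ^ q)" by (simp add: power_mult_distrib L_smul)
  hence "Bf u (c * w) = TrK (c ^ q * (u * LL (w ^ q)))" by (simp add: Bf_def algebra_simps)
  thus ?thesis using \<open>c ^ q \<in> kf\<close> by (simp add: Tr_smul Bf_def)
qed

lemma Hth_herm:
  assumes t: "t \<in> kf"
  shows "herm (Hth t)"
  unfolding herm_def
proof (intro conjI allI ballI)
  fix u w
  show "Hth t u w \<in> kf" unfolding Hth_def
    using t Bf_kf by (intro kf_add kf_mult kf_power) auto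
next
  fix u u' w
  show "Hth t (u + u') w = Hth t u w + Hth t u' w"
    by (simp add: Hth_def Bf_add1 Bf_add2 frob_add1 algebra_simps)
next
  fix c u w assume c: "c \<in> kf"
  have "(c ^ q * Bf w u) ^ q = c * (Bf w u) ^ q"
    using kf_pow_q_q[OF c] by (simp add: power_mult_distrib)
  thus "Hth t (c * u) w = c * Hth t u w"
    by (simp add: Hth_def Bf_smul1[OF c] Bf_smul2[OF c] algebra_simps)
next
  fix u w
  have "(Hth t u w) ^ q = t ^ q * (Bf u w) ^ q + (t ^ q) ^ q * ((Bf w u) ^ q) ^ q"
    by (simp add: Hth_def frob_add1 power_mult_distrib)
  also have "(t ^ q) ^ q = t" by (rule kf_pow_q_q[OF t])
  also have "((Bf w u) ^ q) ^ q = Bf w u" by (rule kf_pow_q_q[OF Bf_kf])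
  finally show "Hth t w u = (Hth t u w) ^ q" by (simp add: Hth_def algebra_simps)
qed

lemma Hth_diag: "Hth t u u = t * Bf u u + (t * Bf u u) ^ q"
  by (simp add: Hth_def power_mult_distrib)

lemma Hth_adj:
  assumes t: "t \<in> kf"
  shows "Hth t x w = TrK (x * (t * LL (w ^ q) + t ^ q * LS (w ^ q)))"
proof -
  have "(Bf w x) ^ q = TrK (x * LS (w ^ q))" unfolding Bf_def by (rule adjoint)
  moreover have "t ^ q \<in> kf" using t by (rule kf_power)
  ultimately show ?thesis using t
    by (simp add: Hth_def Bf_def distrib_left Tr_add Tr_smul[symmetric] algebra_simps)
qed

lemma frob_inj: "inj (\<lambda>w::'a. w ^ q)"
proof (rule injI)
  fix x y :: 'a assume "x ^ q = y ^ q"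
  hence "(x - y) ^ q = 0" using frob_diff[of x y 1] by simp
  thus "x = y" by simp
qed

lemma rad_Hth:
  assumes t: "t \<in> kf" "t \<noteq> 0"
  shows "rad (Hth t) UNIV = (\<lambda>w. w ^ q) -` ker_map q n a (t ^ (q - 1))"
proof -
  have tq: "t ^ q = t * t ^ (q - 1)" using q_ge2
    by (metis Suc_diff_1 power_Suc q_pos)
  have "w \<in> rad (Hth t) UNIV \<longleftrightarrow> t ^ (q - 1) * LS (w ^ q) + LL (w ^ q) = 0" for w
  proof -
    have "w \<in> rad (Hth t) UNIV \<longleftrightarrow> (\<forall>x. TrK (x * (t * LL (w ^ q) + t ^ q * LS (w ^ q))) = 0)"
      by (simp add: rad_def Hth_adj[OF t(1)])
    also have "\<dots> \<longleftrightarrow> t * LL (w ^ q) + t ^ q * LS (w ^ q) = 0"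
      using Tr_nondeg by auto
    also have "t * LL (w ^ q) + t ^ q * LS (w ^ q) = t * (t ^ (q - 1) * LS (w ^ q) + LL (w ^ q))"
      by (simp add: tq algebra_simps)
    also have "\<dots> = 0 \<longleftrightarrow> t ^ (q - 1) * LS (w ^ q) + LL (w ^ q) = 0" using t(2) by simp
    finally show ?thesis .
  qed
  thus ?thesis by (auto simp: ker_map_def)
qed

lemma card_rad_Hth:
  assumes t: "t \<in> kf" "t \<noteq> 0"
  shows "card (rad (Hth t) UNIV) = card (ker_map q n a (t ^ (q - 1)))"
proof -
  let ?f = "\<lambda>w::'a. w ^ q"
  have "surj ?f" by (rule finite_UNIV_inj_surj[OF _ frob_inj]) simp
  have "card (?f -` ker_map q n a (t ^ (q - 1))) = card (?f ` (?f -` ker_map q n a (t ^ (q - 1))))"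
    by (rule card_image[symmetric]) (rule inj_on_subset[OF frob_inj], simp)
  also have "?f ` (?f -` ker_map q n a (t ^ (q - 1))) = ker_map q n a (t ^ (q - 1))"
    using \<open>surj ?f\<close> by (simp add: image_vimage_eq)
  finally show ?thesis using rad_Hth[OF t] by simp
qed


lemma ker_card_le:
  assumes m: "m < n" "a m \<noteq> 0" "\<forall>i. m < i \<and> i < n \<longrightarrow> a i = 0"
  shows "card (ker_map q n a v) \<le> (q^2) ^ (2*m+1)"
proof -
  define E where "E = q ^ (2*(m+1))"
  have E: "E = (q^2) ^ (m+1)" unfolding E_def by (simp only: power_mult)
  define g1 where "g1 i = v ^ E * (a i ^ q) ^ ((q^2) ^ (m - i))" for i
  define e1 where "e1 i = (q^2) ^ (m - i)" for i
  define g2 where "g2 i = a i ^ E" for i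
  define e2 where "e2 i = (q^2) ^ (i + m + 1)" for i
  have key: "(v * LS x + LL x) ^ E = (\<Sum>i<Suc m. g1 i * x ^ e1 i + g2 i * x ^ e2 i)" for x
  proof -
    have "(v * LS x + LL x) ^ E = v ^ E * (LS x) ^ E + (LL x) ^ E"
      by (simp only: E_def frob_add power_mult_distrib)
    also have "(LS x) ^ E = (\<Sum>i<n. ((a i ^ q * x) ^ (q ^ (2 * (n - i - 1)))) ^ E)"
      unfolding linpoly_star_def E_def by (rule frob_sum)
    also have "\<dots> = (\<Sum>i<Suc m. ((a i ^ q * x) ^ (q ^ (2 * (n - i - 1)))) ^ E)"
    proof (rule sum.mono_neutral_right)
      show "\<forall>i\<in>{..<n} - {..<Suc m}. ((a i ^ q * x) ^ (q ^ (2 * (n - i - 1)))) ^ E = 0"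
        using m q_pos by (auto simp: E_def zero_power)
    qed (use m in auto)
    also have "\<dots> = (\<Sum>i<Suc m. (a i ^ q) ^ ((q^2) ^ (m - i)) * x ^ e1 i)"
    proof (rule sum.cong[OF refl])
      fix i assume "i \<in> {..<Suc m}"
      hence i: "i \<le> m" by simp
      have "((a i ^ q * x) ^ (q ^ (2 * (n - i - 1)))) ^ E = (a i ^ q * x) ^ ((q^2) ^ (n - i - 1 + (m + 1)))"
        by (simp only: E power_mult[symmetric] power_add)
      also have "n - i - 1 + (m + 1) = n + (m - i)" using i m(1) by simp
      also have "(a i ^ q * x) ^ ((q^2) ^ (n + (m - i))) = (a i ^ q * x) ^ ((q^2) ^ (m - i))"
        by (rule pow_Qn_add)
      finally show "((a i ^ q * x) ^ (q ^ (2 * (n - i - 1)))) ^ E = (a i ^ q) ^ ((q^2) ^ (m - i)) * x ^ e1 i"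
        by (simp add: e1_def power_mult_distrib)
    qed
    also have "(LL x) ^ E = (\<Sum>i<n. (a i * x ^ (q ^ (2*i))) ^ E)"
      unfolding linpoly_def E_def by (rule frob_sum)
    also have "\<dots> = (\<Sum>i<Suc m. (a i * x ^ (q ^ (2*i))) ^ E)"
    proof (rule sum.mono_neutral_right)
      show "\<forall>i\<in>{..<n} - {..<Suc m}. (a i * x ^ (q ^ (2*i))) ^ E = 0"
        using m q_pos by (auto simp: E_def zero_power)
    qed (use m in auto)
    also have "\<dots> = (\<Sum>i<Suc m. g2 i * x ^ e2 i)"
    proof (rule sum.cong[OF refl])
      fix i
      have "q ^ (2*i) * E = (q^2) ^ (i + m + 1)" by (simp add: E_def power_mult[symmetric] power_add[symmetric] algebra_simps)
      thus "(a i * x ^ (q ^ (2*i))) ^ E = g2 i * x ^ e2 i"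
        by (simp add: g2_def e2_def power_mult_distrib power_mult[symmetric])
    qed
    finally show ?thesis by (simp add: g1_def sum.distrib sum_distrib_left algebra_simps)
  qed
  have "ker_map q n a v \<subseteq> {x. (\<Sum>i\<in>{..<Suc m}. g1 i * x ^ e1 i + g2 i * x ^ e2 i) = 0}"
  proof
    fix x assume "x \<in> ker_map q n a v"
    hence "v * LS x + LL x = 0" by (simp add: ker_map_def)
    hence "(v * LS x + LL x) ^ E = 0" using q_pos by (simp add: E_def zero_power)
    thus "x \<in> {x. (\<Sum>i\<in>{..<Suc m}. g1 i * x ^ e1 i + g2 i * x ^ e2 i) = 0}" using key by simp
  qed
  hence "card (ker_map q n a v) \<le> card {x. (\<Sum>i\<in>{..<Suc m}. g1 i * x ^ e1 i + g2 i * x ^ e2 i) = 0}"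
    by (intro card_mono) auto
  also have "\<dots> \<le> e2 m"
  proof (rule sparse_poly_roots2)
    show "g2 m \<noteq> 0" using m(2) by (simp add: g2_def)
    fix i assume "i \<in> {..<Suc m}"
    hence i: "i \<le> m" by simp
    have "m - i < m + m + 1" by simp
    hence "e1 i < e2 m" unfolding e1_def e2_def using Q_gt1 by (intro power_strict_increasing) auto
    thus "e1 i \<noteq> e2 m \<and> e1 i \<le> e2 m" by simp
    have "e2 i \<le> e2 m" unfolding e2_def using Q_gt1 i by (intro power_increasing) auto
    moreover have "e2 i = e2 m \<longrightarrow> i = m" unfolding e2_def
    proof
      assume "(q^2) ^ (i + m + 1) = (q^2) ^ (m + m + 1)"
      hence "i + m + 1 = m + m + 1" by (rule Qpow_inj)
      thus "i = m" by simp
    qed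
    ultimately show "e2 i \<le> e2 m \<and> (e2 i = e2 m \<longrightarrow> i = m)" by simp
  qed auto
  also have "e2 m = (q^2) ^ (2*m+1)" unfolding e2_def by (simp only: mult_2)
  finally show ?thesis .
qed


lemma subsp_UNIV: "subsp UNIV" by (simp add: subsp_def)

definition eps :: "'a \<Rightarrow> nat \<Rightarrow> int" where
  "eps tc e = (if tc = 0 then (-1) ^ (n - e) * (int q - 1) * int q ^ (n + e)
               else - ((-1) ^ (n - e) * int q ^ (n + e)))"

definition edim :: "'a \<Rightarrow> nat" where
  "edim t = dim_q2 q (ker_map q n a (t ^ (q - 1)))"

lemma theta_count:
  assumes t: "t \<in> kf" "t \<noteq> 0" and c: "c \<in> kf"
  shows "edim t \<le> n \<and> int q * int (card {u. (t * (Bf u u + c)) ^ q + t * (Bf u u + c) = 0})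
           = int q ^ (2*n) + eps ((t * c) ^ q + t * c) (edim t)"
proof -
  let ?H = "Hth t"
  let ?tc = "(t * c) ^ q + t * c"
  have hH: "herm ?H" by (rule Hth_herm[OF t(1)])
  obtain d where d: "card (rad ?H UNIV) = (q^2) ^ d"
    using subsp_card[OF rad_subsp[OF hH subsp_UNIV]] by blast
  have "card (ker_map q n a (t ^ (q - 1))) = (q^2) ^ d" using d card_rad_Hth[OF t] by simp
  hence ed: "edim t = d" unfolding edim_def by (rule dim_q2_eq)
  have cU: "card (UNIV :: 'a set) = (q^2) ^ n" using card_UNIV by (simp add: power_mult)
  from herm_count[OF hH subsp_UNIV cU d] have dn: "d \<le> n"
    and Z: "int q * int (card {w. ?H w w = 0}) = int q ^ (2*n) + (-1) ^ (n - d) * (int q - 1) * int q ^ (n + d)"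
    by auto
  have set_eq: "{u. (t * (Bf u u + c)) ^ q + t * (Bf u u + c) = 0} = {u. ?H u u = - ?tc}"
  proof (rule Collect_cong)
    fix u
    have "(t * (Bf u u + c)) ^ q + t * (Bf u u + c) = ?H u u + ?tc"
      by (simp add: Hth_diag distrib_left frob_add1 algebra_simps)
    thus "((t * (Bf u u + c)) ^ q + t * (Bf u u + c) = 0) = (?H u u = - ?tc)"
      by (simp only: add_eq_0_iff2)
  qed
  show ?thesis
  proof (cases "?tc = 0")
    case True
    thus ?thesis using Z dn set_eq ed by (simp add: eps_def)
  next
    case False
    have tcF: "?tc \<in> Fq"
    proof -
      have tc: "t * c \<in> kf" using t c by (simp add: kf_mult)
      have "?tc ^ q = ((t * c) ^ q) ^ q + (t * c) ^ q" by (simp add: frob_add1)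
      also have "((t * c) ^ q) ^ q = t * c" by (rule kf_pow_q_q[OF tc])
      finally show ?thesis by (simp add: Fq_def add.commute)
    qed
    have m1: "- ?tc \<in> Fq" by (rule Fq_minus[OF tcF])
    have m2: "- ?tc \<noteq> 0" using False by (simp only: neg_equal_0_iff_equal) simp
    have "card {w \<in> UNIV. ?H w w = - ?tc} = card {w \<in> UNIV. ?H w w = 1}"
      by (rule value_card_eq[OF hH subsp_UNIV m1 m2 Fq_1]) simp
    hence "card {w. ?H w w = - ?tc} = card {w \<in> UNIV. ?H w w = 1}" by simp
    moreover have "int (card (UNIV :: 'a set)) = int (card {w. ?H w w = 0}) + (int q - 1) * int (card {w \<in> UNIV. ?H w w = 1})"
      using value_sum[OF hH subsp_UNIV] by simp
    ultimately have S: "int q ^ (2*n) = int (card {w. ?H w w = 0}) + (int q - 1) * int (card {w. ?H w w = - ?tc})"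
      using card_UNIV by simp
    define C where "C = int (card {w. ?H w w = - ?tc})"
    define Z0 where "Z0 = int (card {w. ?H w w = 0})"
    define X where "X = int q"
    define s where "s = ((-1)::int) ^ (n - d)"
    have S': "X ^ (2*n) = Z0 + (X - 1) * C" using S by (simp add: C_def Z0_def X_def)
    have Z': "X * Z0 = X ^ (2*n) + s * (X - 1) * X ^ (n + d)" using Z by (simp add: Z0_def X_def s_def)
    have "(X - 1) * (X * C) = (X - 1) * (X ^ (2*n) - s * X ^ (n + d))"
    proof -
      have "(X - 1) * (X * C) = X * ((X - 1) * C)" by (simp add: algebra_simps)
      also have "\<dots> = X * (X ^ (2*n) - Z0)" using S' by simp
      also have "\<dots> = X * X ^ (2*n) - X * Z0" by (simp add: algebra_simps)
      also have "\<dots> = (X - 1) * (X ^ (2*n) - s * X ^ (n + d))" using Z' by (simp add: algebra_simps)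
      finally show ?thesis .
    qed
    moreover have "X - 1 \<noteq> 0" using q_ge2 by (simp add: X_def)
    ultimately have "X * C = X ^ (2*n) - s * X ^ (n + d)" by simp
    thus ?thesis using set_eq dn ed False by (simp add: eps_def C_def X_def s_def)
  qed
qed

lemma card_filter_sum: "finite A \<Longrightarrow> card {x\<in>A. P x} = (\<Sum>x\<in>A. if P x then 1 else 0)"
  by (simp add: sum.inter_filter[symmetric])

lemma double_count:
  assumes c: "c \<in> kf"
  shows "(\<Sum>t\<in>kf - {0}. int (card {u. (t * (Bf u u + c)) ^ q + t * (Bf u u + c) = 0}))
       = int (Ncount q n a c) * (int q ^ 2 - 1) + (int q ^ (2*n) - int (Ncount q n a c)) * (int q - 1)"
proof -
  let ?P = "\<lambda>t u. (t * (Bf u u + c)) ^ q + t * (Bf u u + c) = 0"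
  have "(\<Sum>t\<in>kf - {0}. card {u. ?P t u}) = (\<Sum>t\<in>kf - {0}. \<Sum>u\<in>UNIV. if ?P t u then 1 else 0)"
    using card_filter_sum[of "UNIV :: 'a set"] by simp
  also have "\<dots> = (\<Sum>u\<in>UNIV. \<Sum>t\<in>kf - {0}. if ?P t u then 1 else 0)" by (rule sum.swap)
  also have "\<dots> = (\<Sum>u\<in>UNIV. card {t \<in> kf - {0}. ?P t u})"
    by (rule sum.cong[OF refl], rule card_filter_sum[symmetric], simp)
  also have "\<dots> = (\<Sum>u\<in>UNIV. if Bf u u + c = 0 then q^2 - 1 else q - 1)"
  proof (rule sum.cong[OF refl])
    fix u
    have "Bf u u + c \<in> kf" using Bf_kf c by (rule kf_add)
    thus "card {t \<in> kf - {0}. ?P t u} = (if Bf u u + c = 0 then q^2 - 1 else q - 1)"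
      by (rule count_theta)
  qed
  finally have A: "(\<Sum>t\<in>kf - {0}. card {u. ?P t u}) = (\<Sum>u\<in>UNIV. if Bf u u + c = 0 then q^2 - 1 else q - 1)" .
  have N: "Ncount q n a c = card {u. Bf u u + c = 0}" by (simp add: Ncount_def Bf_def)
  have "int (\<Sum>u\<in>UNIV. if Bf u u + c = 0 then q^2 - 1 else q - 1)
      = (\<Sum>u\<in>UNIV. if Bf u u + c = 0 then int q ^ 2 - 1 else int q - 1)"
    unfolding of_nat_sum by (intro sum.cong refl) (use Q_gt1 q_ge2 in \<open>auto simp: of_nat_diff\<close>)
  also have "\<dots> = (\<Sum>u\<in>{u. Bf u u + c = 0}. int q ^ 2 - 1) + (\<Sum>u\<in>- {u. Bf u u + c = 0}. int q - 1)"
    by (simp add: sum.If_cases)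
  also have "\<dots> = int (Ncount q n a c) * (int q ^ 2 - 1) + int (card (- {u. Bf u u + c = 0})) * (int q - 1)"
    by (simp add: N)
  also have "card (- {u. Bf u u + c = 0}) = q ^ (2*n) - Ncount q n a c"
    by (simp add: N Compl_eq_Diff_UNIV card_Diff_subset card_UNIV)
  also have "int (q ^ (2*n) - Ncount q n a c) = int q ^ (2*n) - int (Ncount q n a c)"
  proof -
    have "Ncount q n a c \<le> q ^ (2*n)" unfolding Ncount_def using card_UNIV
      by (metis card_mono finite subset_UNIV)
    thus ?thesis by (simp add: of_nat_diff)
  qed
  finally have B: "int (\<Sum>u\<in>UNIV. if Bf u u + c = 0 then q^2 - 1 else q - 1) = int (Ncount q n a c) * (int q ^ 2 - 1) + (int q ^ (2*n) - int (Ncount q n a c)) * (int q - 1)" .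
  have "(\<Sum>t\<in>kf - {0}. int (card {u. ?P t u})) = int (\<Sum>t\<in>kf - {0}. card {u. ?P t u})"
    by (simp only: of_nat_sum)
  also have "\<dots> = int (\<Sum>u\<in>UNIV. if Bf u u + c = 0 then q^2 - 1 else q - 1)" by (simp only: A)
  finally show ?thesis using B by simp
qed


lemma edim_card:
  assumes t: "t \<in> kf" "t \<noteq> 0"
  shows "card (ker_map q n a (t ^ (q - 1))) = (q^2) ^ (edim t)"
proof -
  obtain d where d: "card (rad (Hth t) UNIV) = (q^2) ^ d"
    using subsp_card[OF rad_subsp[OF Hth_herm[OF t(1)] subsp_UNIV]] by blast
  have "card (ker_map q n a (t ^ (q - 1))) = (q^2) ^ d" using d card_rad_Hth[OF t] by simp
  moreover hence "edim t = d" unfolding edim_def by (rule dim_q2_eq)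
  ultimately show ?thesis by simp
qed

lemma key_identity:
  assumes c: "c \<in> kf"
  shows "int q ^ 2 * (int q - 1) * (int (Ncount q n a c) - int q ^ (2*(n-1)))
         = (\<Sum>t\<in>kf - {0}. eps ((t * c) ^ q + t * c) (edim t))"
proof -
  define X where "X = int q"
  define N where "N = int (Ncount q n a c)"
  let ?cnt = "\<lambda>t. int (card {u. (t * (Bf u u + c)) ^ q + t * (Bf u u + c) = 0})"
  let ?eps = "\<lambda>t. eps ((t * c) ^ q + t * c) (edim t)"
  have "X * (\<Sum>t\<in>kf - {0}. ?cnt t) = (\<Sum>t\<in>kf - {0}. X ^ (2*n) + ?eps t)"
    unfolding sum_distrib_left
    by (rule sum.cong[OF refl]) (use theta_count c in \<open>auto simp: X_def\<close>)
  also have "\<dots> = (X^2 - 1) * X ^ (2*n) + (\<Sum>t\<in>kf - {0}. ?eps t)"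
    using kf_minus0_card Q_gt1 by (simp add: sum.distrib X_def of_nat_diff)
  finally have A: "X * (N * (X^2 - 1) + (X ^ (2*n) - N) * (X - 1)) = (X^2 - 1) * X ^ (2*n) + (\<Sum>t\<in>kf - {0}. ?eps t)"
    using double_count[OF c] by (simp add: X_def N_def)
  have P: "X ^ (2*n) = X^2 * X ^ (2*(n-1))"
  proof -
    have "2*n = 2 + 2*(n-1)" using n_pos by simp
    thus ?thesis by (simp only: power_add)
  qed
  have "X^2 * (X - 1) * (N - X ^ (2*(n-1))) = X * (N * (X^2 - 1) + (X ^ (2*n) - N) * (X - 1)) - (X^2 - 1) * X ^ (2*n)"
    unfolding P by (simp add: algebra_simps power2_eq_square)
  also have "\<dots> = (\<Sum>t\<in>kf - {0}. ?eps t)" using A by simp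
  finally show ?thesis by (simp add: X_def N_def)
qed

lemma eps_bound:
  assumes e: "e \<le> 2*m+1"
  shows "\<bar>eps tc e\<bar> \<le> (int q - 1) * int q ^ (n + e)"
    "(int q - 1) * int q ^ (n + e) \<le> (int q - 1) * int q ^ (n + 2*m + 1)"
proof -
  define Y where "Y = int q ^ (n + e)"
  define s where "s = ((-1)::int) ^ (n - e)"
  have X1: "int q - 1 \<ge> 1" using q_ge2 by simp
  have Y0: "Y \<ge> 0" by (simp add: Y_def)
  have s1: "\<bar>s\<bar> = 1" by (simp add: s_def power_abs)
  have YY: "1 * Y \<le> (int q - 1) * Y" by (rule mult_right_mono[OF X1 Y0])
  have a1: "\<bar>s * (int q - 1) * Y\<bar> = (int q - 1) * Y" using s1 X1 Y0 by (simp add: abs_mult)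
  have a2: "\<bar>- (s * Y)\<bar> = Y" using s1 Y0 by (simp add: abs_mult)
  have "eps tc e = (if tc = 0 then s * (int q - 1) * Y else - (s * Y))"
    by (simp add: eps_def s_def Y_def)
  thus "\<bar>eps tc e\<bar> \<le> (int q - 1) * int q ^ (n + e)"
    using a1 a2 YY by (simp add: Y_def)
  have "int q ^ (n + e) \<le> int q ^ (n + 2*m + 1)" using e q_ge2 by (intro power_increasing) auto
  thus "(int q - 1) * int q ^ (n + e) \<le> (int q - 1) * int q ^ (n + 2*m + 1)"
    using X1 by (intro mult_left_mono) auto
qed


lemma edim_le_2m1:
  assumes m: "m < n" "a m \<noteq> 0" "\<forall>i. m < i \<and> i < n \<longrightarrow> a i = 0"
    and t: "t \<in> kf" "t \<noteq> 0"
  shows "edim t \<le> 2*m+1"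
proof -
  have "(q^2) ^ (edim t) = card (ker_map q n a (t ^ (q - 1)))" using edim_card[OF t] by simp
  also have "\<dots> \<le> (q^2) ^ (2*m+1)" by (rule ker_card_le[OF m])
  finally have "(q^2) ^ (edim t) \<le> (q^2) ^ (2*m+1)" .
  thus ?thesis by (rule Qpow_le)
qed

lemma main_result:
  assumes m: "m < n" "a m \<noteq> 0" "\<forall>i. m < i \<and> i < n \<longrightarrow> a i = 0" and c: "c \<in> kf"
  shows "\<bar>int (Ncount q n a c) - int q ^ (2*(n-1))\<bar> \<le> (int q ^ 2 - 1) * int q ^ (n + 2*m - 1)
    \<and> (\<bar>int (Ncount q n a c) - int q ^ (2*(n-1))\<bar> = (int q ^ 2 - 1) * int q ^ (n + 2*m - 1)
        \<longleftrightarrow> c = 0 \<and> (\<forall>v \<in> U_grp q. dim_q2 q (ker_map q n a v) = 2*m + 1))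
    \<and> (c = 0 \<and> (\<forall>v \<in> U_grp q. dim_q2 q (ker_map q n a v) = 2*m + 1) \<longrightarrow>
        int (Ncount q n a 0) - int q ^ (2*(n-1)) = (-1) ^ (n-1) * (int q ^ 2 - 1) * int q ^ (n + 2*m - 1))"
proof -
  define X where "X = int q"
  define D where "D = int (Ncount q n a c) - X ^ (2*(n-1))"
  define Z where "Z = X ^ (n + 2*m - 1)"
  define M0 where "M0 = (X^2 - 1) * Z"
  define Y where "Y = X ^ (n + 2*m + 1)"
  define G where "G = (X - 1) * Y"
  define K where "K = kf - {0::'a}"
  define tc where "tc t = (t * c) ^ q + t * c" for t
  define ef where "ef t = eps (tc t) (edim t)" for t
  define cond where "cond = (\<forall>v \<in> U_grp q. dim_q2 q (ker_map q n a v) = 2*m + 1)"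
  define allE where "allE = (\<forall>t\<in>K. edim t = 2*m + 1)"
  have X2: "X \<ge> 2" using q_ge2 by (simp add: X_def)
  have Zpos: "Z > 0" using X2 by (simp add: Z_def)
  have YZ: "Y = X^2 * Z"
  proof -
    have "n + 2*m + 1 = 2 + (n + 2*m - 1)" using n_pos by simp
    thus ?thesis by (simp only: Y_def Z_def power_add)
  qed
  have pos: "X^2 * (X - 1) > 0" using X2 by simp
  have cardK: "card K = q^2 - 1" by (simp add: K_def kf_minus0_card)
  have cardKi: "int (card K) = X^2 - 1" using cardK Q_gt1 by (simp add: X_def of_nat_diff)
  have KI: "X^2 * (X - 1) * D = (\<Sum>t\<in>K. ef t)"
    using key_identity[OF c] by (simp add: X_def D_def K_def ef_def tc_def)
  have edle: "edim t \<le> 2*m+1" if "t \<in> K" for t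
    using that edim_le_2m1[OF m] by (simp add: K_def)
  have edn: "edim t \<le> n" if "t \<in> K" for t
    using that theta_count[OF _ _ c] by (simp add: K_def)
  have bnd: "\<bar>ef t\<bar> \<le> G" if "t \<in> K" for t
    unfolding ef_def G_def X_def Y_def
    by (rule order.trans[OF eps_bound(1) eps_bound(2)]) (rule edle[OF that])+
  have sum_bnd: "\<bar>\<Sum>t\<in>K. ef t\<bar> \<le> (\<Sum>t\<in>K. \<bar>ef t\<bar>)" by (rule sum_abs)
  have sum_G: "(\<Sum>t\<in>K. G) = (X^2 - 1) * G" using cardKi by simp
  have GM: "(X^2 - 1) * G = X^2 * (X - 1) * M0"
    by (simp add: G_def M0_def YZ algebra_simps)
  have absD: "\<bar>X^2 * (X - 1) * D\<bar> = X^2 * (X - 1) * \<bar>D\<bar>"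
    by (simp only: abs_mult[of "X^2 * (X - 1)" D] abs_of_pos[OF pos])
  have "X^2 * (X - 1) * \<bar>D\<bar> \<le> X^2 * (X - 1) * M0"
  proof -
    have "X^2 * (X - 1) * \<bar>D\<bar> = \<bar>\<Sum>t\<in>K. ef t\<bar>" using KI absD by simp
    also have "\<dots> \<le> (\<Sum>t\<in>K. \<bar>ef t\<bar>)" by (rule sum_bnd)
    also have "\<dots> \<le> (\<Sum>t\<in>K. G)" by (rule sum_mono) (rule bnd)
    finally show ?thesis using sum_G GM by simp
  qed
  hence B1: "\<bar>D\<bar> \<le> M0" using pos by (simp add: mult_le_cancel_left_pos)
  have strict1: "\<bar>D\<bar> < M0" if "\<not> allE"
  proof -
    obtain t0 where t0: "t0 \<in> K" "edim t0 \<noteq> 2*m+1" using \<open>\<not> allE\<close> by (auto simp: allE_def)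
    hence lt: "edim t0 \<le> 2*m" using edle[OF t0(1)] by simp
    have "\<bar>ef t0\<bar> \<le> (X - 1) * X ^ (n + edim t0)"
      using eps_bound(1)[OF edle[OF t0(1)]] by (simp add: ef_def X_def)
    also have "\<dots> \<le> (X - 1) * X ^ (n + 2*m)"
      using lt X2 by (intro mult_left_mono power_increasing) auto
    also have "\<dots> < G"
    proof -
      have "X ^ (n + 2*m) < X ^ (n + 2*m + 1)" using X2 by (intro power_strict_increasing) auto
      thus ?thesis using X2 by (simp add: G_def Y_def)
    qed
    finally have s0: "\<bar>ef t0\<bar> < G" .
    have "(\<Sum>t\<in>K. \<bar>ef t\<bar>) < (\<Sum>t\<in>K. G)"
      by (rule sum_strict_mono_ex1) (use bnd t0 s0 in \<open>auto simp: K_def\<close>)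
    hence "X^2 * (X - 1) * \<bar>D\<bar> < X^2 * (X - 1) * M0"
      using KI absD sum_bnd sum_G GM by simp
    thus ?thesis using pos by (simp add: mult_less_cancel_left_pos)
  qed
  define s where "s = ((-1)::int) ^ (n - (2*m+1))"
  have oneK: "1 \<in> K" by (simp add: K_def kf_1)
  have exact: "D = (if c = 0 then s * M0 else - s * Z)" if allE
  proof -
    have efE: "ef t = (if tc t = 0 then s * (X - 1) * Y else - (s * Y))" if "t \<in> K" for t
      using \<open>allE\<close> that by (simp add: allE_def ef_def eps_def s_def X_def Y_def)
    have "(\<Sum>t\<in>K. ef t) = (\<Sum>t\<in>K. if tc t = 0 then s * (X - 1) * Y else - (s * Y))"
      by (rule sum.cong[OF refl]) (rule efE)
    also have "\<dots> = int (card (K \<inter> {t. tc t = 0})) * (s * (X - 1) * Y) + int (card (K \<inter> - {t. tc t = 0})) * (- (s * Y))"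
      by (simp add: sum.If_cases)
    finally have S: "(\<Sum>t\<in>K. ef t) = int (card (K \<inter> {t. tc t = 0})) * (s * (X - 1) * Y) + int (card (K \<inter> - {t. tc t = 0})) * (- (s * Y))" .
    have split: "card (K \<inter> {t. tc t = 0}) + card (K \<inter> - {t. tc t = 0}) = card K"
      by (subst card_Un_disjoint[symmetric]) (auto intro: arg_cong[where f = card])
    show ?thesis
    proof (cases "c = 0")
      case True
      hence "K \<inter> {t. tc t = 0} = K" by (auto simp: tc_def)
      hence "card (K \<inter> - {t. tc t = 0}) = 0" "int (card (K \<inter> {t. tc t = 0})) = X^2 - 1"
        using split cardKi by auto
      hence "X^2 * (X - 1) * D = (X^2 - 1) * (s * (X - 1) * Y)" using KI S by simp
      also have "\<dots> = X^2 * (X - 1) * (s * M0)" by (simp add: YZ M0_def algebra_simps)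
      finally have "D = s * M0" using X2 by simp
      thus ?thesis using True by simp
    next
      case False
      have "card (K \<inter> {t. tc t = 0}) = card {t \<in> kf - {0}. (t * c) ^ q + t * c = 0}"
        by (rule arg_cong[where f = card]) (auto simp: K_def tc_def)
      also have "\<dots> = q - 1" using count_theta[OF c] False by simp
      finally have c1: "int (card (K \<inter> {t. tc t = 0})) = X - 1" using q_ge2 by (simp add: X_def of_nat_diff)
      hence c2: "int (card (K \<inter> - {t. tc t = 0})) = X^2 - X"
        using split cardKi by (simp add: algebra_simps flip: of_nat_add)
      have "X^2 * (X - 1) * D = (X - 1) * (s * (X - 1) * Y) + (X^2 - X) * (- (s * Y))"
        using KI S c1 c2 by simp
      also have "\<dots> = X^2 * (X - 1) * (- s * Z)" by (simp add: YZ algebra_simps power2_eq_square)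
      finally have eq: "X^2 * (X - 1) * D = X^2 * (X - 1) * (- s * Z)" .
      have nz: "X^2 * (X - 1) \<noteq> 0" using pos by linarith
      from eq have "D = - s * Z" by (simp only: mult_left_cancel[OF nz])
      thus ?thesis using False by simp
    qed
  qed
  have s_abs: "\<bar>s\<bar> = 1" by (simp add: s_def power_abs)
  have M0pos: "M0 > Z"
  proof -
    have "2 * 2 \<le> X * X" using X2 by (intro mult_mono) auto
    hence "X^2 - 1 > 1" by (simp add: power2_eq_square)
    thus ?thesis using Zpos by (simp add: M0_def)
  qed
  have cond_iff: "cond \<longleftrightarrow> allE"
  proof
    assume cond
    show allE unfolding allE_def
    proof
      fix t assume "t \<in> K"
      hence "t ^ (q - 1) \<in> U_grp q" using U_img by (simp add: K_def)
      thus "edim t = 2*m+1" using \<open>cond\<close> by (simp add: cond_def edim_def)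
    qed
  next
    assume allE
    show cond unfolding cond_def
    proof
      fix v :: 'a assume "v \<in> U_grp q"
      then obtain t where "t \<in> kf" "t \<noteq> 0" "t ^ (q - 1) = v" using U_surj by blast
      thus "dim_q2 q (ker_map q n a v) = 2*m+1" using \<open>allE\<close> by (auto simp: allE_def K_def edim_def)
    qed
  qed
  have s_val: "s = (-1) ^ (n - 1)" if allE
  proof -
    have "2*m+1 \<le> n" using edn[OF oneK] \<open>allE\<close> oneK by (simp add: allE_def)
    hence "n - 1 = (n - (2*m+1)) + 2*m" by simp
    thus ?thesis by (simp add: s_def power_add power_mult)
  qed
  have conj2: "\<bar>D\<bar> = M0 \<longleftrightarrow> c = 0 \<and> cond"
  proof
    assume h: "\<bar>D\<bar> = M0"
    have allE using strict1 h by fastforce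
    moreover have "c = 0"
    proof (rule ccontr)
      assume "c \<noteq> 0"
      hence "D = - s * Z" using exact[OF \<open>allE\<close>] by simp
      hence "\<bar>D\<bar> = Z" using s_abs Zpos by (simp add: abs_mult)
      thus False using h M0pos by simp
    qed
    ultimately show "c = 0 \<and> cond" using cond_iff by simp
  next
    assume "c = 0 \<and> cond"
    hence "allE" "c = 0" using cond_iff by auto
    hence "D = s * M0" using exact by simp
    thus "\<bar>D\<bar> = M0" using s_abs M0pos Zpos by (simp add: abs_mult)
  qed
  have conj3: "c = 0 \<and> cond \<longrightarrow> D = (-1) ^ (n-1) * M0"
  proof
    assume "c = 0 \<and> cond"
    hence "allE" "c = 0" using cond_iff by auto
    thus "D = (-1) ^ (n-1) * M0" using exact s_val by simp
  qed
  show ?thesis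
    using B1 conj2 conj3 by (auto simp: D_def M0_def Z_def X_def cond_def mult.assoc)
qed

end

theorem theorem4p3:
  fixes q n m :: nat and a :: "nat \<Rightarrow> 'a::{field,finite}" and c :: 'a
  assumes q_pp: "\<exists>p k. prime p \<and> 0 < k \<and> q = p ^ k"
    and n_pos: "0 < n"
    and card_field: "card (UNIV :: 'a set) = q ^ (2*n)"
    and m_lt: "m < n"
    and deg: "a m \<noteq> 0" "\<forall>i. m < i \<and> i < n \<longrightarrow> a i = 0"
    and c_sub: "c \<in> subfield_q2 q"
  shows "\<bar>int (Ncount q n a c) - int q ^ (2*(n-1))\<bar> \<le> (int q ^ 2 - 1) * int q ^ (n + 2*m - 1)
    \<and> (\<bar>int (Ncount q n a c) - int q ^ (2*(n-1))\<bar> = (int q ^ 2 - 1) * int q ^ (n + 2*m - 1)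
        \<longleftrightarrow> c = 0 \<and> (\<forall>v \<in> U_grp q. dim_q2 q (ker_map q n a v) = 2*m + 1))
    \<and> (c = 0 \<and> (\<forall>v \<in> U_grp q. dim_q2 q (ker_map q n a v) = 2*m + 1) \<longrightarrow>
        int (Ncount q n a 0) - int q ^ (2*(n-1)) = (-1) ^ (n-1) * (int q ^ 2 - 1) * int q ^ (n + 2*m - 1))"
proof -
  obtain p k where pk: "prime p" "0 < k" "q = p ^ k" using q_pp by blast
  interpret ctx q n p k a
    by unfold_locales (use pk n_pos card_field in auto)
  show ?thesis by (rule main_result[OF m_lt deg(1) deg(2) c_sub])
qed

end
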